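(* The quotient $\mathcal A/\mathcal J$ is an infinite-dimensional, purely infinite Banach $*$-algebra; that is, it is not a division algebra, and for every non-zero $a\in\mathcal A/\mathcal J$ there exist $b,c\in\mathcal A/\mathcal J$ with $bac=1_{\mathcal A/\mathcal J}$.
   Context: Let $\mathrm{Cu}_2$ be the involutive monoid with identity $e$ and zero element $\lozenge$ (so $\lozenge t=\lozenge=t\lozenge$ for all $t$), generated by $s_1,s_2,s_1^*,s_2^*$ subject to $s_1^*s_1=e=s_2^*s_2$ and $s_1^*s_2=\lozenge=s_2^*s_1$, with involution $t\mapsto t^*$ satisfying $(t^* )^*=t$, $(tu)^*=u^*t^*$. Let $\mathcal A=\ell^1(\mathrm{Cu}_2\setminus\{\lozenge\})$ with product $\#$ determined by bilinearity and continuity from $\delta_s\#\delta_t=\delta_{st}$ if $st\neq\lozenge$ and $\delta_s\#\delta_t=0$ if $st=\lozenge$; this is a unital Banach $*$-algebra with unit $\delta_e$ and isometric involution $f^*(s)=\overline{f(s^* )}$. Let $f_0=\delta_e-\delta_{s_1s_1^*}-\delta_{s_2s_2^*}$ and let $\mathcal J$ be the closed two-sided ideal of $\mathcal A$ generated by $f_0$ (a $*$-ideal); $\mathcal A/\mathcal J$ carries the quotient norm and involution. *)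

theory Defs
  imports "HOL-Analysis.Analysis"
begin

text \<open>Every non-zero element of Cu_2 has a unique normal form s_mu s_nu^* with mu, nu
  words over the alphabet {1,2}; we encode the letter 1 as False and 2 as True.
  The pair (mu, nu) stands for s_mu s_nu^*, where s_(i1...ik) = s_i1 ... s_ik.
  The zero element is represented by None in the partial multiplication.\<close>

type_synonym cu2 = "bool list \<times> bool list"

definition cu_e :: cu2 where "cu_e = ([], [])"

definition cu_s1 :: cu2 where "cu_s1 = ([False], [])"
definition cu_s2 :: cu2 where "cu_s2 = ([True], [])"

definition cu_star :: "cu2 \<Rightarrow> cu2" where "cu_star x = (snd x, fst x)"

text \<open>Multiplication; None is the zero element.
  (s_mu s_nu^*)(s_al s_be^*): if al = nu @ g it is s_(mu @ g) s_be^*;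
  if nu = al @ g it is s_mu s_(be @ g)^*; otherwise it is zero.\<close>
definition cu_mult :: "cu2 \<Rightarrow> cu2 \<Rightarrow> cu2 option" where
  "cu_mult x y =
     (let (mu, nu) = x; (al, be) = y in
      if take (length nu) al = nu then Some (mu @ drop (length nu) al, be)
      else if take (length al) nu = al then Some (mu, be @ drop (length al) nu)
      else None)"

definition l1A :: "(cu2 \<Rightarrow> complex) set" where
  "l1A = {f. (\<lambda>s. norm (f s)) summable_on UNIV}"

definition l1norm :: "(cu2 \<Rightarrow> complex) \<Rightarrow> real" where
  "l1norm f = (\<Sum>\<^sub>\<infinity>s. norm (f s))"

text \<open>The product #, obtained from delta_s # delta_t = delta_(st) (or 0 if st is zero)
  by bilinearity and continuity.\<close>
definition l1conv :: "(cu2 \<Rightarrow> complex) \<Rightarrow> (cu2 \<Rightarrow> complex) \<Rightarrow> (cu2 \<Rightarrow> complex)" (infixl "#\<^sub>\<ell>" 70) where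
  "l1conv f g = (\<lambda>u. \<Sum>\<^sub>\<infinity>p \<in> {p. cu_mult (fst p) (snd p) = Some u}. f (fst p) * g (snd p))"

definition l1delta :: "cu2 \<Rightarrow> (cu2 \<Rightarrow> complex)" where
  "l1delta s = (\<lambda>t. if t = s then 1 else 0)"

definition l1inv :: "(cu2 \<Rightarrow> complex) \<Rightarrow> (cu2 \<Rightarrow> complex)" where
  "l1inv f = (\<lambda>s. cnj (f (cu_star s)))"

definition l1unit :: "cu2 \<Rightarrow> complex" where
  "l1unit = l1delta cu_e"

definition f0 :: "cu2 \<Rightarrow> complex" where
  "f0 = (\<lambda>s. l1unit s - l1delta ([False], [False]) s - l1delta ([True], [True]) s)"

definition l1_ideal :: "(cu2 \<Rightarrow> complex) set \<Rightarrow> bool" where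
  "l1_ideal S \<longleftrightarrow> S \<subseteq> l1A \<and> (\<lambda>s. 0) \<in> S \<and>
     (\<forall>f\<in>S. \<forall>g\<in>S. (\<lambda>s. f s + g s) \<in> S) \<and>
     (\<forall>c::complex. \<forall>f\<in>S. (\<lambda>s. c * f s) \<in> S) \<and>
     (\<forall>a\<in>l1A. \<forall>f\<in>S. a #\<^sub>\<ell> f \<in> S \<and> f #\<^sub>\<ell> a \<in> S)"

definition l1_closed :: "(cu2 \<Rightarrow> complex) set \<Rightarrow> bool" where
  "l1_closed S \<longleftrightarrow> (\<forall>X f. (\<forall>n. X n \<in> S) \<and> f \<in> l1A \<and>
       (\<lambda>n. l1norm (\<lambda>s. X n s - f s)) \<longlonglongrightarrow> 0 \<longrightarrow> f \<in> S)"

definition J :: "(cu2 \<Rightarrow> complex) set" where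
  "J = \<Inter>{S. l1_ideal S \<and> l1_closed S \<and> f0 \<in> S}"

text \<open>The class of a in A/J is zero iff a is in J; [a] = [b] iff a - b in J.\<close>

definition qdiff :: "(cu2 \<Rightarrow> complex) \<Rightarrow> (cu2 \<Rightarrow> complex) \<Rightarrow> (cu2 \<Rightarrow> complex)" where
  "qdiff f g = (\<lambda>s. f s - g s)"

definition quot_finite_dim :: bool where
  "quot_finite_dim \<longleftrightarrow> (\<exists>F. finite F \<and> F \<subseteq> l1A \<and>
      (\<forall>f\<in>l1A. \<exists>c :: (cu2 \<Rightarrow> complex) \<Rightarrow> complex.
          (\<lambda>s. f s - (\<Sum>g\<in>F. c g * g s)) \<in> J))"

definition quot_division_algebra :: bool where
  "quot_division_algebra \<longleftrightarrow> l1unit \<notin> J \<and>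
     (\<forall>a\<in>l1A. a \<notin> J \<longrightarrow> (\<exists>b\<in>l1A. qdiff (a #\<^sub>\<ell> b) l1unit \<in> J \<and> qdiff (b #\<^sub>\<ell> a) l1unit \<in> J))"

definition quot_purely_infinite :: bool where
  "quot_purely_infinite \<longleftrightarrow>
     (\<forall>a\<in>l1A. a \<notin> J \<longrightarrow> (\<exists>b\<in>l1A. \<exists>c\<in>l1A. qdiff ((b #\<^sub>\<ell> a) #\<^sub>\<ell> c) l1unit \<in> J))"

end

theory Submission
  imports Defs "HOL-Library.Function_Algebras"
begin

lemma cu_mult_char: "cu_mult (a,b) (c,d) = Some r \<longleftrightarrow>
   (\<exists>g. c = b@g \<and> r = (a@g, d)) \<or> (\<exists>g. b = c@g \<and> r = (a, d@g))"
  unfolding cu_mult_def Let_def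
  apply (auto simp: take_all)
  apply (metis append_take_drop_id)+
  done

lemma cu_mult_None: "cu_mult (a,b) (c,d) = None \<longleftrightarrow> (\<nexists>g. c = b@g) \<and> (\<nexists>g. b = c@g)"
  unfolding cu_mult_def Let_def
  by (auto simp: take_all) (metis append_eq_conv_conj)+

fun mo :: "cu2 option \<Rightarrow> cu2 option \<Rightarrow> cu2 option" where
  "mo (Some x) (Some y) = cu_mult x y"
| "mo _ _ = None"

fun act :: "cu2 option \<Rightarrow> bool list \<Rightarrow> bool list option" where
  "act None l = None"
| "act (Some (a,b)) l = (if (\<exists>g. l = b @ g) then Some (a @ drop (length b) l) else None)"

lemma act_mo: "act (mo x y) l = (case act y l of None \<Rightarrow> None | Some l' \<Rightarrow> act x l')"
proof (cases x; cases y)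
  fix x' y' assume x: "x = Some x'" and y: "y = Some y'"
  obtain a b where x': "x' = (a,b)" by fastforce
  obtain c d where y': "y' = (c,d)" by fastforce
  show ?thesis
  proof (cases "cu_mult (a,b) (c,d)")
    case None
    have "act (Some (a,b)) (c @ drop (length d) l) = None" for l using None x' by (auto simp: cu_mult_None append_eq_append_conv2)
    then show ?thesis using x y x' y' None by auto
  next
    case (Some r)
    from Some[unfolded cu_mult_char] consider (A) g where "c = b@g" "r = (a@g,d)" | (B) g where "b = c@g" "r = (a,d@g)" by blast
    then show ?thesis
    proof cases
      case A
      then show ?thesis using x y x' y' Some by auto
    next
      case B
      then show ?thesis using x y x' y' Some by (auto simp: append_eq_append_conv2)
    qed
  qed
qed auto

lemma act_inj: assumes "\<And>l. act x l = act x' l" shows "x = x'"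
proof (cases x; cases x')
  fix p q assume x: "x = Some p" and x': "x' = Some q"
  obtain a b where p: "p = (a,b)" by fastforce
  obtain c d where q: "q = (c,d)" by fastforce
  have 1: "act x b = Some a" using x p by auto
  have 2: "act x' d = Some c" using x' q by auto
  from 1 assms[of b] have "\<exists>g. b = d @ g" using x' q by (auto split: if_splits)
  moreover from 2 assms[of d] have "\<exists>g. d = b @ g" using x p by (auto split: if_splits)
  ultimately have "b = d" by auto
  then show ?thesis using 1 2 assms[of b] x x' p q by auto
next
next
  fix p assume "x = None" "x' = Some p" then show ?thesis using assms[of "snd p"] by (cases p) auto
next
  fix p assume "x' = None" "x = Some p" then show ?thesis using assms[of "snd p"] by (cases p) auto
qed simp


lemma mo_assoc: "mo (mo x y) z = mo x (mo y z)"
  by (rule act_inj) (simp add: act_mo split: option.splits)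


section \<open>Fiber sums\<close>

lemma fiber_G:
  fixes h :: "'a \<Rightarrow> 'c::{banach, real_normed_algebra}" and \<pi> :: "'a \<Rightarrow> 'b option"
  assumes h: "(\<lambda>x. norm (h x)) summable_on UNIV" and G: "\<And>u. norm (G u) \<le> B"
  shows fiber_G_summable: "(\<lambda>u. G u * (\<Sum>\<^sub>\<infinity>x\<in>{x. \<pi> x = Some u}. h x)) summable_on U"
    and fiber_G_eq: "(\<Sum>\<^sub>\<infinity>u\<in>U. G u * (\<Sum>\<^sub>\<infinity>x\<in>{x. \<pi> x = Some u}. h x))
             = (\<Sum>\<^sub>\<infinity>x\<in>{x. \<exists>u\<in>U. \<pi> x = Some u}. G (the (\<pi> x)) * h x)"
proof -
  define S where "S = Sigma U (\<lambda>u. {x. \<pi> x = Some u})"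
  define T where "T = {x. \<exists>u\<in>U. \<pi> x = Some u}"
  have inj: "inj_on snd S" unfolding S_def by (auto simp: inj_on_def)
  have img: "snd ` S = T" unfolding S_def T_def by force
  have B0: "B \<ge> 0" using G[of undefined] norm_ge_zero order_trans by blast
  have "(\<lambda>x. norm (G (the (\<pi> x)) * h x)) summable_on T"
  proof (rule Infinite_Sum.abs_summable_on_comparison_test'[where g="\<lambda>x. B * norm (h x)"])
    show "(\<lambda>x. B * norm (h x)) summable_on T"
      by (rule summable_on_cmult_right, rule summable_on_subset[OF h]) auto
    show "norm (G (the (\<pi> x)) * h x) \<le> B * norm (h x)" for x
      by (rule order_trans[OF norm_mult_ineq]) (simp add: G mult_right_mono)
  qed
  hence sT: "(\<lambda>x. G (the (\<pi> x)) * h x) summable_on T" by (rule abs_summable_summable)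
  have sS: "(\<lambda>(u,x). G u * h x) summable_on S"
  proof -
    have "((\<lambda>x. G (the (\<pi> x)) * h x) \<circ> snd) summable_on S"
      using sT summable_on_reindex[OF inj] img by metis
    then show ?thesis by (rule summable_on_cong[THEN iffD1, rotated]) (auto simp: S_def)
  qed
  have hs: "h summable_on {x. \<pi> x = Some u}" for u
    by (rule abs_summable_summable, rule summable_on_subset[OF h]) auto
  have eq1: "(\<Sum>\<^sub>\<infinity>x\<in>{x. \<pi> x = Some u}. G u * h x) = G u * (\<Sum>\<^sub>\<infinity>x\<in>{x. \<pi> x = Some u}. h x)" for u
    by (rule infsum_cmult_right) (rule hs)
  from summable_on_Sigma_banach[OF sS[unfolded S_def]]
  show "(\<lambda>u. G u * (\<Sum>\<^sub>\<infinity>x\<in>{x. \<pi> x = Some u}. h x)) summable_on U" by (simp add: eq1)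
  have "(\<Sum>\<^sub>\<infinity>u\<in>U. G u * (\<Sum>\<^sub>\<infinity>x\<in>{x. \<pi> x = Some u}. h x)) = (\<Sum>\<^sub>\<infinity>(u,x)\<in>S. G u * h x)"
    using infsum_Sigma'_banach[OF sS[unfolded S_def]] by (simp add: eq1 S_def)
  also have "\<dots> = (\<Sum>\<^sub>\<infinity>x\<in>S. ((\<lambda>x. G (the (\<pi> x)) * h x) \<circ> snd) x)"
    by (rule infsum_cong) (auto simp: S_def)
  also have "\<dots> = (\<Sum>\<^sub>\<infinity>x\<in>T. G (the (\<pi> x)) * h x)"
    using infsum_reindex[OF inj] img by metis
  finally show "(\<Sum>\<^sub>\<infinity>u\<in>U. G u * (\<Sum>\<^sub>\<infinity>x\<in>{x. \<pi> x = Some u}. h x)) = (\<Sum>\<^sub>\<infinity>x\<in>{x. \<exists>u\<in>U. \<pi> x = Some u}. G (the (\<pi> x)) * h x)"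
    by (simp add: T_def)
qed

lemma fiber_summable:
  fixes h :: "'a \<Rightarrow> 'c::banach"
  assumes h: "(\<lambda>x. norm (h x)) summable_on UNIV"
  shows "h summable_on A"
  by (rule abs_summable_summable, rule summable_on_subset[OF h]) auto

lemma fiber_norm:
  fixes h :: "'a \<Rightarrow> complex" and \<pi> :: "'a \<Rightarrow> 'b option"
  assumes h: "(\<lambda>x. norm (h x)) summable_on UNIV"
  shows fiber_norm_summable: "(\<lambda>u. norm (\<Sum>\<^sub>\<infinity>x\<in>{x. \<pi> x = Some u}. h x)) summable_on U"
    and fiber_norm_le: "(\<Sum>\<^sub>\<infinity>u\<in>U. norm (\<Sum>\<^sub>\<infinity>x\<in>{x. \<pi> x = Some u}. h x))
         \<le> (\<Sum>\<^sub>\<infinity>x\<in>{x. \<exists>u\<in>U. \<pi> x = Some u}. norm (h x))"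
proof -
  have h': "(\<lambda>x. norm (norm (h x))) summable_on UNIV" using h by simp
  have s1: "(\<lambda>u. (1::real) * (\<Sum>\<^sub>\<infinity>x\<in>{x. \<pi> x = Some u}. norm (h x))) summable_on U"
    by (rule fiber_G_summable[OF h', where B=1]) simp
  have e1: "(\<Sum>\<^sub>\<infinity>u\<in>U. (1::real) * (\<Sum>\<^sub>\<infinity>x\<in>{x. \<pi> x = Some u}. norm (h x)))
       = (\<Sum>\<^sub>\<infinity>x\<in>{x. \<exists>u\<in>U. \<pi> x = Some u}. 1 * norm (h x))"
    by (rule fiber_G_eq[OF h', where B=1]) simp
  have le: "norm (\<Sum>\<^sub>\<infinity>x\<in>{x. \<pi> x = Some u}. h x) \<le> (\<Sum>\<^sub>\<infinity>x\<in>{x. \<pi> x = Some u}. norm (h x))" for u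
    by (rule norm_infsum_bound) (rule summable_on_subset[OF h], auto)
  show s2: "(\<lambda>u. norm (\<Sum>\<^sub>\<infinity>x\<in>{x. \<pi> x = Some u}. h x)) summable_on U"
    by (rule Infinite_Sum.abs_summable_on_comparison_test'[OF s1[simplified]]) (simp add: le)
  have "(\<Sum>\<^sub>\<infinity>u\<in>U. norm (\<Sum>\<^sub>\<infinity>x\<in>{x. \<pi> x = Some u}. h x)) \<le> (\<Sum>\<^sub>\<infinity>u\<in>U. (\<Sum>\<^sub>\<infinity>x\<in>{x. \<pi> x = Some u}. norm (h x)))"
    by (rule infsum_mono[OF s2 s1[simplified]]) (rule le)
  then show "(\<Sum>\<^sub>\<infinity>u\<in>U. norm (\<Sum>\<^sub>\<infinity>x\<in>{x. \<pi> x = Some u}. h x))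
         \<le> (\<Sum>\<^sub>\<infinity>x\<in>{x. \<exists>u\<in>U. \<pi> x = Some u}. norm (h x))" using e1 by simp
qed


section \<open>The l1 algebra\<close>

lemma l1A_iff: "f \<in> l1A \<longleftrightarrow> (\<lambda>s. norm (f s)) summable_on UNIV"
  by (simp add: l1A_def)

lemma l1A_summable: "f \<in> l1A \<Longrightarrow> f summable_on A"
  by (rule fiber_summable) (simp add: l1A_def)

lemma l1A_norm_summable: "f \<in> l1A \<Longrightarrow> (\<lambda>s. norm (f s)) summable_on A"
  by (rule summable_on_subset[of _ UNIV]) (auto simp: l1A_def)

lemma l1norm_nonneg: "l1norm f \<ge> 0"
  by (simp add: l1norm_def infsum_nonneg)

definition isl1 :: "('a \<Rightarrow> complex) \<Rightarrow> bool" where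
  "isl1 f \<longleftrightarrow> (\<lambda>s. norm (f s)) summable_on UNIV"
definition nm :: "('a \<Rightarrow> complex) \<Rightarrow> real" where
  "nm f = (\<Sum>\<^sub>\<infinity>s. norm (f s))"

lemma l1A_isl1: "f \<in> l1A \<longleftrightarrow> isl1 f" by (simp add: l1A_def isl1_def)
lemma l1norm_nm: "l1norm = nm" by (simp add: l1norm_def nm_def fun_eq_iff)

lemma prod_l1A:
  assumes f: "isl1 f" and g: "isl1 g"
  shows "(\<lambda>p. f (fst p) * g (snd p)) \<in> Collect isl1"
    and "nm (\<lambda>p. f (fst p) * g (snd p)) = nm f * nm g"
proof -
  have hs: "((\<lambda>q. norm (f p) * norm (g q)) has_sum (norm (f p) * nm g)) UNIV" for p
    using g unfolding nm_def isl1_def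
    by (intro has_sum_cmult_right) (simp add: summable_iff_has_sum_infsum)
  have s2: "(\<lambda>p. norm (f p) * nm g) summable_on UNIV"
    using f unfolding isl1_def by (intro summable_on_cmult_left)
  have S: "(\<lambda>(p,q). norm (f p) * norm (g q)) summable_on (UNIV \<times> UNIV)"
    by (rule summable_on_SigmaI[where g="\<lambda>p. norm (f p) * nm g"]) (use hs s2 in auto)
  then show "(\<lambda>p. f (fst p) * g (snd p)) \<in> Collect isl1"
    unfolding isl1_def by (simp add: norm_mult case_prod_unfold)
  have "nm (\<lambda>p. f (fst p) * g (snd p)) = (\<Sum>\<^sub>\<infinity>(p,q)\<in>UNIV\<times>UNIV. norm (f p) * norm (g q))"
    unfolding nm_def by (simp add: norm_mult case_prod_unfold)
  also have "\<dots> = (\<Sum>\<^sub>\<infinity>p. \<Sum>\<^sub>\<infinity>q. norm (f p) * norm (g q))"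
    using infsum_Sigma'_banach[OF S] by simp
  also have "\<dots> = (\<Sum>\<^sub>\<infinity>p. norm (f p) * nm g)"
    using infsumI[OF hs] by simp
  also have "\<dots> = nm f * nm g"
    by (simp add: infsum_cmult_left' nm_def)
  finally show "nm (\<lambda>p. f (fst p) * g (snd p)) = nm f * nm g" .
qed

lemma conv_l1A:
  assumes f: "f \<in> l1A" and g: "g \<in> l1A"
  shows "f #\<^sub>\<ell> g \<in> l1A" and "l1norm (f #\<^sub>\<ell> g) \<le> l1norm f * l1norm g"
proof -
  note P = prod_l1A[OF f[unfolded l1A_isl1] g[unfolded l1A_isl1], unfolded mem_Collect_eq]
  have h: "(\<lambda>p. norm (f (fst p) * g (snd p))) summable_on UNIV" using P(1) by (simp add: isl1_def)
  note fs = fiber_norm_summable[OF h, of "\<lambda>p. cu_mult (fst p) (snd p)" UNIV]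
  note fl = fiber_norm_le[OF h, of "\<lambda>p. cu_mult (fst p) (snd p)" UNIV]
  show "f #\<^sub>\<ell> g \<in> l1A" using fs by (simp add: l1A_def l1conv_def)
  have "(\<Sum>\<^sub>\<infinity>x\<in>{x. \<exists>u\<in>UNIV. cu_mult (fst x) (snd x) = Some u}. norm (f (fst x) * g (snd x)))
     \<le> (\<Sum>\<^sub>\<infinity>x. norm (f (fst x) * g (snd x)))"
    by (rule infsum_mono_neutral) (use h in \<open>auto intro: summable_on_subset\<close>)
  with fl P(2) show "l1norm (f #\<^sub>\<ell> g) \<le> l1norm f * l1norm g"
    by (simp add: l1norm_def l1conv_def nm_def)
qed

lemma sigma_reindex:
  fixes F :: "'c \<Rightarrow> complex"
  assumes F: "(\<lambda>z. norm (F z)) summable_on UNIV" and k: "inj_on k (Sigma A B)"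
  shows "(\<Sum>\<^sub>\<infinity>y\<in>A. \<Sum>\<^sub>\<infinity>x\<in>B y. F (k (y,x))) = (\<Sum>\<^sub>\<infinity>z\<in>k ` Sigma A B. F z)"
proof -
  have "F summable_on k ` Sigma A B" by (rule fiber_summable[OF F])
  then have S: "(F \<circ> k) summable_on Sigma A B" using summable_on_reindex[OF k] by blast
  have "(\<Sum>\<^sub>\<infinity>y\<in>A. \<Sum>\<^sub>\<infinity>x\<in>B y. F (k (y,x))) = (\<Sum>\<^sub>\<infinity>(y,x)\<in>Sigma A B. F (k (y,x)))"
    by (rule infsum_Sigma'_banach) (use S in \<open>simp add: o_def case_prod_unfold\<close>)
  also have "\<dots> = infsum (F \<circ> k) (Sigma A B)" by (simp add: case_prod_unfold comp_def)
  also have "\<dots> = (\<Sum>\<^sub>\<infinity>z\<in>k ` Sigma A B. F z)" using infsum_reindex[OF k, of F] by simp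
  finally show ?thesis .
qed


lemma mo_SS: "mo (Some a) (Some b) = cu_mult a b" by simp

lemma mo_eq_Some_L: "mo (mo (Some a) (Some b)) (Some r) = Some u \<longleftrightarrow> (\<exists>q. cu_mult a b = Some q \<and> cu_mult q r = Some u)"
  by (cases "cu_mult a b") auto

lemma mo_eq_Some_R: "mo (Some a) (mo (Some b) (Some r)) = Some u \<longleftrightarrow> (\<exists>q. cu_mult b r = Some q \<and> cu_mult a q = Some u)"
  by (cases "cu_mult b r") auto

lemma conv_eq: "(f #\<^sub>\<ell> g) u = (\<Sum>\<^sub>\<infinity>p\<in>{p. cu_mult (fst p) (snd p) = Some u}. f (fst p) * g (snd p))"
  by (simp add: l1conv_def)

lemma conv_assoc:
  assumes f: "f \<in> l1A" and g: "g \<in> l1A" and h: "h \<in> l1A"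
  shows "(f #\<^sub>\<ell> g) #\<^sub>\<ell> h = f #\<^sub>\<ell> (g #\<^sub>\<ell> h)"
proof
  fix u
  define F where "F z = f (fst z) * (g (fst (snd z)) * h (snd (snd z)))" for z :: "cu2 \<times> cu2 \<times> cu2"
  have gh: "isl1 (\<lambda>p. g (fst p) * h (snd p))" using prod_l1A g h by (auto simp: l1A_isl1)
  have fgh: "isl1 F" using prod_l1A(1)[OF f[unfolded l1A_isl1] gh] unfolding F_def[abs_def] by simp
  have Fs: "(\<lambda>z. norm (F z)) summable_on UNIV" using fgh by (simp add: isl1_def)
  have fg': "isl1 (\<lambda>p. f (fst p) * g (snd p))" using prod_l1A f g by (auto simp: l1A_isl1)
  define fib where "fib u = {p :: cu2\<times>cu2. cu_mult (fst p) (snd p) = Some u}" for u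
  have "((f #\<^sub>\<ell> g) #\<^sub>\<ell> h) u = (\<Sum>\<^sub>\<infinity>p\<in>fib u. (\<Sum>\<^sub>\<infinity>q\<in>fib (fst p). f (fst q) * g (snd q)) * h (snd p))"
    by (simp add: conv_eq fib_def)
  also have "\<dots> = (\<Sum>\<^sub>\<infinity>p\<in>fib u. \<Sum>\<^sub>\<infinity>q\<in>fib (fst p). F ((\<lambda>(p,q). (fst q, snd q, snd p)) (p,q)))"
  proof (rule infsum_cong)
    fix p
    have "(\<Sum>\<^sub>\<infinity>q\<in>fib (fst p). f (fst q) * g (snd q)) * h (snd p) = (\<Sum>\<^sub>\<infinity>q\<in>fib (fst p). f (fst q) * g (snd q) * h (snd p))"
      by (rule infsum_cmult_left[symmetric]) (rule fiber_summable, use fg' in \<open>simp add: isl1_def\<close>)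
    then show "(\<Sum>\<^sub>\<infinity>q\<in>fib (fst p). f (fst q) * g (snd q)) * h (snd p) = (\<Sum>\<^sub>\<infinity>q\<in>fib (fst p). F ((\<lambda>(p,q). (fst q, snd q, snd p)) (p,q)))"
      by (simp add: F_def mult.assoc)
  qed
  also have "\<dots> = (\<Sum>\<^sub>\<infinity>z\<in>(\<lambda>(p,q). (fst q, snd q, snd p)) ` Sigma (fib u) (\<lambda>p. fib (fst p)). F z)"
    by (rule sigma_reindex[OF Fs]) (auto simp: inj_on_def fib_def)
  also have "(\<lambda>(p,q). (fst q, snd q, snd p)) ` Sigma (fib u) (\<lambda>p. fib (fst p)) = {z. mo (mo (Some (fst z)) (Some (fst (snd z)))) (Some (snd (snd z))) = Some u}"
    unfolding mo_eq_Some_L by (auto simp: fib_def image_def)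
  also have "\<dots> = {z. mo (Some (fst z)) (mo (Some (fst (snd z))) (Some (snd (snd z)))) = Some u}"
    by (simp only: mo_assoc)
  also have "\<dots> = (\<lambda>(p,q). (fst p, fst q, snd q)) ` Sigma (fib u) (\<lambda>p. fib (snd p))"
    unfolding mo_eq_Some_R by (auto simp: fib_def image_def)
  also have "(\<Sum>\<^sub>\<infinity>z\<in>(\<lambda>(p,q). (fst p, fst q, snd q)) ` Sigma (fib u) (\<lambda>p. fib (snd p)). F z)
      = (\<Sum>\<^sub>\<infinity>p\<in>fib u. \<Sum>\<^sub>\<infinity>q\<in>fib (snd p). F ((\<lambda>(p,q). (fst p, fst q, snd q)) (p,q)))"
    by (rule sigma_reindex[OF Fs, symmetric]) (auto simp: inj_on_def fib_def)
  also have "\<dots> = (\<Sum>\<^sub>\<infinity>p\<in>fib u. f (fst p) * (\<Sum>\<^sub>\<infinity>q\<in>fib (snd p). g (fst q) * h (snd q)))"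
  proof (rule infsum_cong)
    fix p
    have "f (fst p) * (\<Sum>\<^sub>\<infinity>q\<in>fib (snd p). g (fst q) * h (snd q)) = (\<Sum>\<^sub>\<infinity>q\<in>fib (snd p). f (fst p) * (g (fst q) * h (snd q)))"
      by (rule infsum_cmult_right[symmetric]) (rule fiber_summable, use gh in \<open>simp add: isl1_def\<close>)
    then show "(\<Sum>\<^sub>\<infinity>q\<in>fib (snd p). F ((\<lambda>(p,q). (fst p, fst q, snd q)) (p,q))) = f (fst p) * (\<Sum>\<^sub>\<infinity>q\<in>fib (snd p). g (fst q) * h (snd q))"
      by (simp add: F_def)
  qed
  also have "\<dots> = (f #\<^sub>\<ell> (g #\<^sub>\<ell> h)) u"
    by (simp add: conv_eq fib_def)
  finally show "((f #\<^sub>\<ell> g) #\<^sub>\<ell> h) u = (f #\<^sub>\<ell> (g #\<^sub>\<ell> h)) u" .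
qed

lemma infsum_delta_fst:
  fixes f :: "'b \<Rightarrow> complex"
  shows "(\<Sum>\<^sub>\<infinity>p\<in>A. l1delta s (fst p) * f (snd p)) = (\<Sum>\<^sub>\<infinity>q\<in>{q. (s,q) \<in> A}. f q)"
proof -
  have "(\<Sum>\<^sub>\<infinity>p\<in>A. l1delta s (fst p) * f (snd p)) = (\<Sum>\<^sub>\<infinity>p\<in>Pair s ` {q. (s,q) \<in> A}. f (snd p))"
    by (rule infsum_cong_neutral) (auto simp: l1delta_def)
  also have "\<dots> = (\<Sum>\<^sub>\<infinity>q\<in>{q. (s,q) \<in> A}. f q)"
    by (subst infsum_reindex) (auto simp: o_def inj_on_def)
  finally show ?thesis .
qed

lemma infsum_delta_snd:
  fixes f :: "'b \<Rightarrow> complex"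
  shows "(\<Sum>\<^sub>\<infinity>p\<in>A. f (fst p) * l1delta s (snd p)) = (\<Sum>\<^sub>\<infinity>q\<in>{q. (q,s) \<in> A}. f q)"
proof -
  have "(\<Sum>\<^sub>\<infinity>p\<in>A. f (fst p) * l1delta s (snd p)) = (\<Sum>\<^sub>\<infinity>p\<in>(\<lambda>q. (q,s)) ` {q. (q,s) \<in> A}. f (fst p))"
    by (rule infsum_cong_neutral) (auto simp: l1delta_def)
  also have "\<dots> = (\<Sum>\<^sub>\<infinity>q\<in>{q. (q,s) \<in> A}. f q)"
    by (subst infsum_reindex) (auto simp: o_def inj_on_def)
  finally show ?thesis .
qed

lemma conv_delta_left: "(l1delta s #\<^sub>\<ell> f) u = (\<Sum>\<^sub>\<infinity>q\<in>{q. cu_mult s q = Some u}. f q)"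
  by (simp add: conv_eq infsum_delta_fst)

lemma conv_delta_right: "(f #\<^sub>\<ell> l1delta s) u = (\<Sum>\<^sub>\<infinity>q\<in>{q. cu_mult q s = Some u}. f q)"
  by (simp add: conv_eq infsum_delta_snd)

lemma cu_mult_e_left: "cu_mult cu_e q = Some q"
  by (cases q) (simp add: cu_mult_def cu_e_def)

lemma cu_mult_e_right: "cu_mult q cu_e = Some q"
  by (cases q) (simp add: cu_mult_def cu_e_def)

lemma unit_left: "l1unit #\<^sub>\<ell> f = f"
  unfolding l1unit_def by (rule ext) (simp add: conv_delta_left cu_mult_e_left)

lemma unit_right: "f #\<^sub>\<ell> l1unit = f"
  unfolding l1unit_def by (rule ext) (simp add: conv_delta_right cu_mult_e_right)

lemma delta_l1A: "l1delta s \<in> l1A"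
proof -
  have "(\<lambda>t. norm (l1delta s t)) summable_on {s}" by simp
  then show ?thesis unfolding l1A_def mem_Collect_eq
    by (rule summable_on_cong_neutral[THEN iffD1, rotated -1]) (auto simp: l1delta_def)
qed

lemma nm_delta: "nm (l1delta s) = 1"
proof -
  have "nm (l1delta s) = (\<Sum>\<^sub>\<infinity>t\<in>{s}. norm (l1delta s t))"
    unfolding nm_def by (rule infsum_cong_neutral) (auto simp: l1delta_def)
  then show ?thesis by (simp add: l1delta_def)
qed

lemma fib_summable:
  assumes "f \<in> l1A" "g \<in> l1A"
  shows "(\<lambda>p. f (fst p) * g (snd p)) summable_on A"
  using prod_l1A(1)[of f g] assms by (auto simp: l1A_isl1 isl1_def intro: fiber_summable)

lemma conv_add_right:
  assumes "f \<in> l1A" "g \<in> l1A" "h \<in> l1A"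
  shows "f #\<^sub>\<ell> (\<lambda>s. g s + h s) = (\<lambda>u. (f #\<^sub>\<ell> g) u + (f #\<^sub>\<ell> h) u)"
  by (rule ext) (simp add: conv_eq distrib_left infsum_add fib_summable assms)

lemma conv_add_left:
  assumes "f \<in> l1A" "g \<in> l1A" "h \<in> l1A"
  shows "(\<lambda>s. g s + h s) #\<^sub>\<ell> f = (\<lambda>u. (g #\<^sub>\<ell> f) u + (h #\<^sub>\<ell> f) u)"
  by (rule ext) (simp add: conv_eq distrib_right infsum_add fib_summable assms)

lemma conv_scal_right: "f #\<^sub>\<ell> (\<lambda>s. c * g s) = (\<lambda>u. c * (f #\<^sub>\<ell> g) u)"
  by (rule ext) (simp add: conv_eq infsum_cmult_right' mult.left_commute)

lemma conv_scal_left: "(\<lambda>s. c * g s) #\<^sub>\<ell> f = (\<lambda>u. c * (g #\<^sub>\<ell> f) u)"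
  by (rule ext) (simp add: conv_eq infsum_cmult_right' mult.assoc)

lemma l1A_add: "f \<in> l1A \<Longrightarrow> g \<in> l1A \<Longrightarrow> (\<lambda>s. f s + g s) \<in> l1A"
  unfolding l1A_def mem_Collect_eq
  by (rule Infinite_Sum.abs_summable_on_comparison_test'[where g="\<lambda>s. norm (f s) + norm (g s)"])
     (auto intro: summable_on_add norm_triangle_ineq)

lemma l1A_scal: "f \<in> l1A \<Longrightarrow> (\<lambda>s. c * f s) \<in> l1A"
  unfolding l1A_def mem_Collect_eq by (simp add: norm_mult summable_on_cmult_right)

lemma l1A_neg: "f \<in> l1A \<Longrightarrow> (\<lambda>s. - f s) \<in> l1A"
  unfolding l1A_def by simp

lemma nm_scal: "nm (\<lambda>s. c * f s) = norm c * nm f"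
  unfolding nm_def by (simp add: norm_mult infsum_cmult_right')

lemma nm_neg: "nm (\<lambda>s. - f s) = nm f"
  unfolding nm_def by simp


lemma norm_le_nm: assumes "f \<in> l1A" shows "norm (f a) \<le> nm f"
proof -
  have "(\<Sum>\<^sub>\<infinity>s\<in>{a}. norm (f s)) \<le> (\<Sum>\<^sub>\<infinity>s. norm (f s))"
    by (rule infsum_mono_neutral) (use assms in \<open>auto simp: l1A_def\<close>)
  then show ?thesis by (simp add: nm_def)
qed

lemma telescope_infsum:
  fixes a :: "nat \<Rightarrow> complex"
  assumes a: "a summable_on UNIV"
  shows "(\<Sum>\<^sub>\<infinity>k. a k - a (Suc k)) = a 0"
proof -
  have aS: "(\<lambda>k. a (Suc k)) summable_on UNIV"
    using summable_on_reindex[of Suc UNIV a] summable_on_subset[OF a] by (auto simp: o_def)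
  have U: "(UNIV :: nat set) = {0} \<union> Suc ` UNIV" by (auto intro: nat.exhaust)
  have "(\<Sum>\<^sub>\<infinity>k. a k) = (\<Sum>\<^sub>\<infinity>k\<in>{0}. a k) + (\<Sum>\<^sub>\<infinity>k\<in>Suc ` UNIV. a k)"
    by (subst U, rule infsum_Un_disjoint) (auto intro: summable_on_subset[OF a])
  also have "(\<Sum>\<^sub>\<infinity>k\<in>Suc ` UNIV. a k) = (\<Sum>\<^sub>\<infinity>k. a (Suc k))"
    by (subst infsum_reindex) (auto simp: o_def)
  finally have e: "(\<Sum>\<^sub>\<infinity>k. a k) = a 0 + (\<Sum>\<^sub>\<infinity>k. a (Suc k))" by simp
  have "(\<Sum>\<^sub>\<infinity>k. a k - a (Suc k)) = (\<Sum>\<^sub>\<infinity>k. a k + (- a (Suc k)))" by simp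
  also have "\<dots> = (\<Sum>\<^sub>\<infinity>k. a k) + (\<Sum>\<^sub>\<infinity>k. - a (Suc k))"
    by (rule infsum_add[OF a]) (simp add: summable_on_uminus aS)
  finally show ?thesis using e by (simp add: infsum_uminus)
qed

lemma neumann:
  assumes z: "z \<in> l1A" and q: "nm z < 1"
  shows "\<exists>v\<in>l1A. v #\<^sub>\<ell> (\<lambda>s. l1unit s + z s) = l1unit"
proof -
  define w where "w = (\<lambda>s. - z s)"
  have w: "w \<in> l1A" "nm w = nm z" using z by (auto simp: w_def l1A_neg nm_neg)
  define pw where "pw = rec_nat l1unit (\<lambda>k f. f #\<^sub>\<ell> w)"
  have pw0: "pw 0 = l1unit" and pwS: "pw (Suc k) = pw k #\<^sub>\<ell> w" for k by (simp_all add: pw_def)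
  have pwl: "pw k \<in> l1A" for k
    by (induction k) (auto simp: pw0 pwS l1unit_def delta_l1A intro: conv_l1A w)
  have pwn: "nm (pw k) \<le> nm z ^ k" for k
  proof (induction k)
    case 0 then show ?case by (simp add: pw0 l1unit_def nm_delta)
  next
    case (Suc k)
    have "nm (pw (Suc k)) \<le> nm (pw k) * nm w"
      using conv_l1A(2)[OF pwl w(1)] by (simp add: pwS l1norm_nm)
    also have "\<dots> \<le> nm z ^ k * nm z" using Suc w(2) by (simp add: mult_right_mono nm_def infsum_nonneg)
    finally show ?case by (simp add: mult.commute)
  qed
  have nm0: "nm f \<ge> 0" for f :: "cu2 \<Rightarrow> complex" by (simp add: nm_def infsum_nonneg)
  have geo: "(\<lambda>k. nm z ^ k) summable_on UNIV"
    by (rule summable_nonneg_imp_summable_on) (use q nm0 in \<open>auto intro!: summable_geometric\<close>)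
  have S1: "(\<lambda>k. nm (pw k)) summable_on UNIV"
    using Infinite_Sum.abs_summable_on_comparison_test'[OF geo, of "\<lambda>k. nm (pw k)"] pwn nm0 by simp
  have inner: "((\<lambda>u. norm (pw k u)) has_sum nm (pw k)) UNIV" for k
    using pwl[of k] by (simp add: l1A_def nm_def summable_iff_has_sum_infsum)
  have J: "(\<lambda>(k,u). norm (pw k u)) summable_on UNIV \<times> UNIV"
    by (rule summable_on_SigmaI[where g="\<lambda>k. nm (pw k)"]) (use inner S1 in auto)
  have J': "(\<lambda>(u,k). norm (pw k u)) summable_on UNIV \<times> UNIV"
    using J by (subst summable_on_swap) (simp add: case_prod_unfold)
  define v where "v u = (\<Sum>\<^sub>\<infinity>k. pw k u)" for u
  have pk: "(\<lambda>k. pw k a) summable_on UNIV" for a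
  proof (rule abs_summable_summable)
    show "(\<lambda>k. norm (pw k a)) summable_on UNIV"
      using Infinite_Sum.abs_summable_on_comparison_test'[OF S1, of "\<lambda>k. pw k a"] norm_le_nm[OF pwl] by simp
  qed
  have Hs: "(\<lambda>u. \<Sum>\<^sub>\<infinity>k. norm (pw k u)) summable_on UNIV"
    using summable_on_Sigma_banach[of "\<lambda>u k. norm (pw k u)" UNIV "\<lambda>_. UNIV"] J' by simp
  have vl: "v \<in> l1A"
    unfolding l1A_def mem_Collect_eq
  proof (rule Infinite_Sum.abs_summable_on_comparison_test'[OF Hs])
    fix u show "norm (v u) \<le> (\<Sum>\<^sub>\<infinity>k. norm (pw k u))"
      unfolding v_def by (rule norm_infsum_bound) (use pk in \<open>simp add: summable_on_iff_abs_summable_on_complex\<close>)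
  qed
  define y where "y = (\<lambda>s. l1unit s + z s)"
  have yl: "y \<in> l1A" unfolding y_def by (rule l1A_add) (auto simp: l1unit_def delta_l1A z)
  have Kh: "((\<lambda>p. norm (pw k (fst p)) * norm (y (snd p))) has_sum nm (pw k) * nm y) UNIV" for k
  proof -
    have "(\<lambda>p. norm (pw k (fst p) * y (snd p))) summable_on UNIV"
      using prod_l1A(1)[of "pw k" y] pwl yl by (simp add: l1A_isl1 isl1_def)
    then show "((\<lambda>p. norm (pw k (fst p)) * norm (y (snd p))) has_sum nm (pw k) * nm y) UNIV"
      using prod_l1A(2)[of "pw k" y] pwl yl
      by (simp add: l1A_isl1 nm_def norm_mult summable_iff_has_sum_infsum)
  qed
  have Kg: "(\<lambda>k. nm (pw k) * nm y) summable_on UNIV" by (rule summable_on_cmult_left[OF S1])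
  have K: "(\<lambda>(k,p). norm (pw k (fst p)) * norm (y (snd p))) summable_on UNIV \<times> UNIV"
    by (rule summable_on_SigmaI[where g="\<lambda>k. nm (pw k) * nm y"]) (use Kh Kg in auto)
  have vy: "(v #\<^sub>\<ell> y) u = l1unit u" for u
  proof -
    define F where "F = {p :: cu2 \<times> cu2. cu_mult (fst p) (snd p) = Some u}"
    have sw: "(\<lambda>(p,k). pw k (fst p) * y (snd p)) summable_on F \<times> UNIV"
    proof (rule abs_summable_summable)
      have "(\<lambda>(p,k). norm (pw k (fst p)) * norm (y (snd p))) summable_on UNIV \<times> UNIV"
        using K by (subst summable_on_swap) (simp add: case_prod_unfold)
      then have "(\<lambda>x. norm (case x of (p, k) \<Rightarrow> pw k (fst p) * y (snd p))) summable_on UNIV \<times> UNIV"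
        by (simp add: case_prod_unfold norm_mult)
      then show "(\<lambda>x. norm (case x of (p, k) \<Rightarrow> pw k (fst p) * y (snd p))) summable_on F \<times> UNIV"
        by (rule summable_on_subset) auto
    qed
    have "(v #\<^sub>\<ell> y) u = (\<Sum>\<^sub>\<infinity>p\<in>F. \<Sum>\<^sub>\<infinity>k. pw k (fst p) * y (snd p))"
      unfolding conv_eq F_def v_def
      by (rule infsum_cong, rule infsum_cmult_left[symmetric]) (use pk in auto)
    also have "\<dots> = (\<Sum>\<^sub>\<infinity>k. \<Sum>\<^sub>\<infinity>p\<in>F. pw k (fst p) * y (snd p))"
      by (rule infsum_swap_banach) (use sw in simp)
    also have "\<dots> = (\<Sum>\<^sub>\<infinity>k. pw k u - pw (Suc k) u)"
    proof (rule infsum_cong)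
      fix k
      have "(\<Sum>\<^sub>\<infinity>p\<in>F. pw k (fst p) * y (snd p)) = (pw k #\<^sub>\<ell> y) u" by (simp add: conv_eq F_def)
      also have "\<dots> = (pw k #\<^sub>\<ell> l1unit) u + (pw k #\<^sub>\<ell> z) u"
        unfolding y_def by (subst conv_add_right) (auto simp: pwl z l1unit_def delta_l1A)
      also have "\<dots> = pw k u - pw (Suc k) u"
        using conv_scal_right[of "pw k" "-1" z] by (simp add: unit_right pwS w_def)
      finally show "(\<Sum>\<^sub>\<infinity>p\<in>F. pw k (fst p) * y (snd p)) = pw k u - pw (Suc k) u" .
    qed
    also have "\<dots> = pw 0 u" by (rule telescope_infsum[OF pk])
    finally show ?thesis by (simp add: pw0)
  qed
  show ?thesis using vl vy by (auto simp: y_def fun_eq_iff)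
qed

definition m3 :: "cu2 \<Rightarrow> cu2 \<Rightarrow> cu2 \<Rightarrow> cu2 option" where
  "m3 B s C = mo (mo (Some B) (Some s)) (Some C)"

lemma sandwich_eq:
  assumes a: "a \<in> l1A"
  shows "((l1delta B #\<^sub>\<ell> a) #\<^sub>\<ell> l1delta C) u = (\<Sum>\<^sub>\<infinity>s\<in>{s. m3 B s C = Some u}. a s)"
proof -
  have "((l1delta B #\<^sub>\<ell> a) #\<^sub>\<ell> l1delta C) u = (\<Sum>\<^sub>\<infinity>p\<in>{p. cu_mult p C = Some u}. \<Sum>\<^sub>\<infinity>q\<in>{q. cu_mult B q = Some p}. a (snd (p,q)))"
    by (simp add: conv_delta_left conv_delta_right)
  also have "\<dots> = (\<Sum>\<^sub>\<infinity>q\<in>snd ` Sigma {p. cu_mult p C = Some u} (\<lambda>p. {q. cu_mult B q = Some p}). a q)"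
    by (rule sigma_reindex) (use a in \<open>auto simp: l1A_def inj_on_def\<close>)
  also have "snd ` Sigma {p. cu_mult p C = Some u} (\<lambda>p. {q. cu_mult B q = Some p}) = {s. m3 B s C = Some u}"
    unfolding m3_def mo_eq_Some_L by force
  finally show ?thesis .
qed

lemma success:
  assumes a: "a \<in> l1A"
    and gt: "(\<Sum>\<^sub>\<infinity>s\<in>{s. \<exists>u\<in>-{cu_e}. m3 B s C = Some u}. norm (a s)) < norm (\<Sum>\<^sub>\<infinity>s\<in>{s. m3 B s C = Some cu_e}. a s)"
  shows "\<exists>b\<in>l1A. \<exists>c\<in>l1A. (b #\<^sub>\<ell> a) #\<^sub>\<ell> c = l1unit"
proof -
  define y where "y = (l1delta B #\<^sub>\<ell> a) #\<^sub>\<ell> l1delta C"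
  have yl: "y \<in> l1A" unfolding y_def by (intro conv_l1A delta_l1A a)
  have yu: "y u = (\<Sum>\<^sub>\<infinity>s\<in>{s. m3 B s C = Some u}. a s)" for u
    unfolding y_def by (rule sandwich_eq[OF a])
  have an: "(\<lambda>x. norm (a x)) summable_on UNIV" using a by (simp add: l1A_def)
  have rest: "(\<Sum>\<^sub>\<infinity>u\<in>-{cu_e}. norm (y u)) \<le> (\<Sum>\<^sub>\<infinity>s\<in>{s. \<exists>u\<in>-{cu_e}. m3 B s C = Some u}. norm (a s))"
    unfolding yu by (rule fiber_norm_le[OF an])
  define l where "l = y cu_e"
  have lpos: "norm l > (\<Sum>\<^sub>\<infinity>u\<in>-{cu_e}. norm (y u))" using rest gt yu[of cu_e] by (simp add: l_def)
  have l0: "l \<noteq> 0" using lpos infsum_nonneg[of "-{cu_e}" "\<lambda>u. norm (y u)"] by auto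
  define z where "z = (\<lambda>s. (1/l) * (if s = cu_e then 0 else y s))"
  have zl: "z \<in> l1A" unfolding z_def
  proof (rule l1A_scal)
    show "(\<lambda>s. if s = cu_e then 0 else y s) \<in> l1A" using yl unfolding l1A_def
      by (auto intro: Infinite_Sum.abs_summable_on_comparison_test'[where g="\<lambda>s. norm (y s)"])
  qed
  have "nm (\<lambda>s. if s = cu_e then 0 else y s) = (\<Sum>\<^sub>\<infinity>u\<in>-{cu_e}. norm (y u))"
    unfolding nm_def by (rule infsum_cong_neutral) auto
  then have nz: "nm z < 1" using lpos l0 unfolding z_def nm_scal
    by (simp add: norm_divide field_simps)
  obtain v where vl: "v \<in> l1A" and vv: "v #\<^sub>\<ell> (\<lambda>s. l1unit s + z s) = l1unit"
    using neumann[OF zl nz] by blast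
  have uz: "(\<lambda>s. l1unit s + z s) = (\<lambda>s. (1/l) * y s)"
    using l0 by (auto simp: z_def l_def l1unit_def l1delta_def field_simps fun_eq_iff)
  have vy: "v #\<^sub>\<ell> y = (\<lambda>s. l * l1unit s)"
  proof -
    have "(\<lambda>u. (1/l) * (v #\<^sub>\<ell> y) u) = l1unit" using vv uz conv_scal_right by metis
    then show ?thesis using l0 by (auto simp: fun_eq_iff field_simps)
  qed
  define v' where "v' = (\<lambda>s. (1/l) * v s)"
  have v'l: "v' \<in> l1A" unfolding v'_def by (rule l1A_scal[OF vl])
  define b where "b = v' #\<^sub>\<ell> l1delta B"
  have bl: "b \<in> l1A" unfolding b_def by (intro conv_l1A delta_l1A v'l)
  have "(b #\<^sub>\<ell> a) #\<^sub>\<ell> l1delta C = (v' #\<^sub>\<ell> (l1delta B #\<^sub>\<ell> a)) #\<^sub>\<ell> l1delta C"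
    unfolding b_def by (subst conv_assoc[OF v'l delta_l1A a]) rule
  also have "\<dots> = v' #\<^sub>\<ell> y"
    unfolding y_def by (rule conv_assoc[OF v'l conv_l1A(1)[OF delta_l1A a] delta_l1A])
  also have "\<dots> = l1unit" using l0 unfolding v'_def conv_scal_left vy by (simp add: fun_eq_iff)
  finally show ?thesis using bl delta_l1A by blast
qed

lemma f0_eq: "f0 = (\<lambda>s. l1delta cu_e s - l1delta ([False],[False]) s - l1delta ([True],[True]) s)"
  by (simp add: f0_def l1unit_def)

lemma l1A_diff: "f \<in> l1A \<Longrightarrow> g \<in> l1A \<Longrightarrow> (\<lambda>s. f s - g s) \<in> l1A"
  using l1A_add[of f "\<lambda>s. - g s"] l1A_neg[of g] by simp

lemma f0_l1A: "f0 \<in> l1A"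
  unfolding f0_eq by (intro l1A_diff delta_l1A)

lemma l1A_zero: "(\<lambda>s. 0) \<in> l1A" by (simp add: l1A_def)

lemma ideal_l1A: "l1_ideal l1A"
  unfolding l1_ideal_def using l1A_zero l1A_add l1A_scal conv_l1A by blast

lemma closed_l1A: "l1_closed l1A" unfolding l1_closed_def by blast

lemma J_family: "l1_ideal l1A \<and> l1_closed l1A \<and> f0 \<in> l1A"
  using ideal_l1A closed_l1A f0_l1A by blast

lemma J_sub: "J \<subseteq> l1A" unfolding J_def using J_family by blast

lemma J_least: "l1_ideal S \<Longrightarrow> l1_closed S \<Longrightarrow> f0 \<in> S \<Longrightarrow> J \<subseteq> S"
  unfolding J_def by blast

lemma J_f0: "f0 \<in> J" unfolding J_def by blast

lemma J_zero: "(\<lambda>s. 0) \<in> J" unfolding J_def l1_ideal_def by blast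

lemma J_add: "f \<in> J \<Longrightarrow> g \<in> J \<Longrightarrow> (\<lambda>s. f s + g s) \<in> J"
  unfolding J_def l1_ideal_def by blast

lemma J_scal: "f \<in> J \<Longrightarrow> (\<lambda>s. c * f s) \<in> J"
  unfolding J_def l1_ideal_def by blast

lemma J_convL: "a \<in> l1A \<Longrightarrow> f \<in> J \<Longrightarrow> a #\<^sub>\<ell> f \<in> J"
  unfolding J_def l1_ideal_def by blast

lemma J_convR: "a \<in> l1A \<Longrightarrow> f \<in> J \<Longrightarrow> f #\<^sub>\<ell> a \<in> J"
  unfolding J_def l1_ideal_def by blast

lemma J_closed: "l1_closed J"
  unfolding J_def l1_closed_def by blast

lemma J_diff: "f \<in> J \<Longrightarrow> g \<in> J \<Longrightarrow> (\<lambda>s. f s - g s) \<in> J"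
  using J_add[of f "\<lambda>s. (-1) * g s"] J_scal[of g "-1"] by simp

lemma J_sum: "finite S \<Longrightarrow> (\<And>i. i \<in> S \<Longrightarrow> F i \<in> J) \<Longrightarrow> (\<lambda>t. \<Sum>i\<in>S. F i t) \<in> J"
proof (induction S rule: finite_induct)
  case empty then show ?case by (simp add: J_zero)
next
  case (insert x S) then show ?case by (simp add: J_add)
qed

section \<open>Padding\<close>

lemma m3_pad: "m3 (g,[]) s ([],d) = Some (g @ fst s, d @ snd s)"
  by (cases s) (simp add: m3_def cu_mult_def)

lemma basic_J: "(\<lambda>t. l1delta (g,d) t - l1delta (g@[False], d@[False]) t - l1delta (g@[True], d@[True]) t) \<in> J"
proof -
  have "(l1delta (g,[]) #\<^sub>\<ell> f0) #\<^sub>\<ell> l1delta ([],d) \<in> J"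
    by (intro J_convR J_convL delta_l1A J_f0)
  moreover have "(l1delta (g,[]) #\<^sub>\<ell> f0) #\<^sub>\<ell> l1delta ([],d) = (\<lambda>t. l1delta (g,d) t - l1delta (g@[False], d@[False]) t - l1delta (g@[True], d@[True]) t)"
  proof
    fix u
    have "((l1delta (g,[]) #\<^sub>\<ell> f0) #\<^sub>\<ell> l1delta ([],d)) u = (\<Sum>\<^sub>\<infinity>s\<in>{s. m3 (g,[]) s ([],d) = Some u}. f0 s)"
      by (rule sandwich_eq[OF f0_l1A])
    also have "{s. m3 (g,[]) s ([],d) = Some u} = {s. u = (g @ fst s, d @ snd s)}"
      by (simp add: m3_pad eq_commute)
    finally have e: "((l1delta (g,[]) #\<^sub>\<ell> f0) #\<^sub>\<ell> l1delta ([],d)) u = (\<Sum>\<^sub>\<infinity>s\<in>{s. u = (g @ fst s, d @ snd s)}. f0 s)" .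
    show "((l1delta (g,[]) #\<^sub>\<ell> f0) #\<^sub>\<ell> l1delta ([],d)) u = l1delta (g,d) u - l1delta (g@[False], d@[False]) u - l1delta (g@[True], d@[True]) u"
    proof (cases "\<exists>s. u = (g @ fst s, d @ snd s)")
      case True
      then obtain s where s: "u = (g @ fst s, d @ snd s)" by blast
      have "{s. u = (g @ fst s, d @ snd s)} = {s}" using s by (auto simp: prod_eq_iff)
      then show ?thesis using e s by (cases s) (auto simp: f0_eq l1delta_def cu_e_def)
    next
      case False
      then have "{s. u = (g @ fst s, d @ snd s)} = {}" by auto
      moreover have "u \<noteq> (g,d)" "u \<noteq> (g@[False], d@[False])" "u \<noteq> (g@[True], d@[True])"
        using False by (metis append_Nil2 fst_conv snd_conv)+
      ultimately show ?thesis using e by (simp add: l1delta_def)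
    qed
  qed
  ultimately show ?thesis by simp
qed

definition pad :: "nat \<Rightarrow> cu2 \<Rightarrow> cu2 \<Rightarrow> complex" where
  "pad m s = (\<lambda>t. \<Sum>g\<in>{g. length g = m}. l1delta (fst s @ g, snd s @ g) t)"

lemma words_Suc: "{g :: bool list. length g = Suc m} = (\<lambda>(g,b). g @ [b]) ` ({g. length g = m} \<times> UNIV)"
proof -
  have "x \<in> (\<lambda>(g,b). g @ [b]) ` ({g. length g = m} \<times> UNIV)" if "length x = Suc m" for x :: "bool list"
    using that by (cases x rule: rev_cases) auto
  then show ?thesis by auto
qed

lemma words_finite: "finite {g :: bool list. length g = m}"
  using finite_lists_length_eq[of "UNIV :: bool set" m] by simp

lemma pad_Suc: "pad (Suc m) s t = (\<Sum>g\<in>{g. length g = m}. l1delta (fst s @ g @ [False], snd s @ g @ [False]) t + l1delta (fst s @ g @ [True], snd s @ g @ [True]) t)"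
proof -
  have inj: "inj_on (\<lambda>(g,b). g @ [b]) ({g :: bool list. length g = m} \<times> UNIV)"
    by (auto simp: inj_on_def)
  have "pad (Suc m) s t = (\<Sum>x\<in>{g. length g = m} \<times> UNIV. l1delta (fst s @ fst x @ [snd x], snd s @ fst x @ [snd x]) t)"
    unfolding pad_def words_Suc by (subst sum.reindex[OF inj]) (simp add: case_prod_unfold)
  also have "\<dots> = (\<Sum>g\<in>{g. length g = m}. \<Sum>b\<in>UNIV. l1delta (fst s @ g @ [b], snd s @ g @ [b]) t)"
    by (simp add: sum.cartesian_product case_prod_unfold)
  also have "\<dots> = (\<Sum>g\<in>{g. length g = m}. l1delta (fst s @ g @ [False], snd s @ g @ [False]) t + l1delta (fst s @ g @ [True], snd s @ g @ [True]) t)"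
    by (simp add: UNIV_bool add.commute)
  finally show ?thesis .
qed

lemma pad_J: "(\<lambda>t. l1delta s t - pad m s t) \<in> J"
proof (induction m)
  case 0
  have "pad 0 s = l1delta s" by (rule ext) (simp add: pad_def)
  then show ?case by (simp add: J_zero)
next
  case (Suc m)
  have "(\<lambda>t. \<Sum>g\<in>{g. length g = m}. l1delta (fst s @ g, snd s @ g) t - l1delta ((fst s @ g)@[False], (snd s @ g)@[False]) t - l1delta ((fst s @ g)@[True], (snd s @ g)@[True]) t) \<in> J"
    by (rule J_sum[OF words_finite]) (rule basic_J)
  from J_add[OF Suc.IH this]
  show ?case unfolding pad_Suc by (simp add: pad_def sum_subtractf algebra_simps)
qed

definition lv :: "cu2 \<Rightarrow> nat" where "lv s = min (length (fst s)) (length (snd s))"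
definition bx :: "nat \<Rightarrow> cu2 set" where
  "bx N = {s. lv s \<le> N \<and> length (fst s) \<le> lv s + N \<and> length (snd s) \<le> lv s + N}"
definition Ubox :: "nat \<Rightarrow> cu2 set" where
  "Ubox N = {u. lv u = N \<and> length (fst u) \<le> 2*N \<and> length (snd u) \<le> 2*N}"
definition anc :: "cu2 \<Rightarrow> cu2 set" where
  "anc u = {s. \<exists>g. fst u = fst s @ g \<and> snd u = snd s @ g}"
definition Yf :: "(cu2 \<Rightarrow> complex) \<Rightarrow> nat \<Rightarrow> cu2 \<Rightarrow> complex" where
  "Yf a N = (\<lambda>u. if u \<in> Ubox N then (\<Sum>s\<in>anc u. a s) else 0)"
definition Xf :: "(cu2 \<Rightarrow> complex) \<Rightarrow> nat \<Rightarrow> cu2 \<Rightarrow> complex" where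
  "Xf a N = (\<lambda>s. (if s \<in> bx N then a s else 0) - Yf a N s)"

lemma fin2: "finite {s :: cu2. length (fst s) \<le> n \<and> length (snd s) \<le> m}"
proof -
  have "{s :: cu2. length (fst s) \<le> n \<and> length (snd s) \<le> m} = {xs. length xs \<le> n} \<times> {ys. length ys \<le> m}"
    by auto
  then show ?thesis using finite_lists_length_le[of "UNIV :: bool set"] by simp
qed

lemma bx_finite: "finite (bx N)"
  by (rule finite_subset[OF _ fin2[of "2*N" "2*N"]]) (auto simp: bx_def)

lemma Ubx_finite: "finite (Ubox N)"
  by (rule finite_subset[OF _ fin2[of "2*N" "2*N"]]) (auto simp: Ubox_def)

lemma anc_finite: "finite (anc u)"
  by (rule finite_subset[OF _ fin2[of "length (fst u)" "length (snd u)"]]) (auto simp: anc_def)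

lemma pad_val: "pad m s t = (if \<exists>g. length g = m \<and> t = (fst s @ g, snd s @ g) then 1 else 0)"
proof (cases "\<exists>g. length g = m \<and> t = (fst s @ g, snd s @ g)")
  case True
  then obtain g where g: "length g = m" "t = (fst s @ g, snd s @ g)" by blast
  have "pad m s t = (\<Sum>g'\<in>{g. length g = m}. if g' = g then 1 else 0)"
    unfolding pad_def by (rule sum.cong) (use g in \<open>auto simp: l1delta_def\<close>)
  also have "\<dots> = 1" using g words_finite[of m] by simp
  finally show ?thesis using True by simp
next
  case False
  then show ?thesis unfolding pad_def by (auto simp: l1delta_def intro!: sum.neutral)
qed

lemma bx_pad_set: "{s \<in> bx N. \<exists>g. length g = N - lv s \<and> t = (fst s @ g, snd s @ g)} = (if t \<in> Ubox N then anc t else {})"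
proof (cases "t \<in> Ubox N")
  case True
  show ?thesis
  proof (simp only: True if_True, intro equalityI subsetI)
    fix s assume "s \<in> {s \<in> bx N. \<exists>g. length g = N - lv s \<and> t = (fst s @ g, snd s @ g)}"
    then show "s \<in> anc t" by (auto simp: anc_def)
  next
    fix s assume "s \<in> anc t"
    then obtain g where g: "fst t = fst s @ g" "snd t = snd s @ g" by (auto simp: anc_def)
    have "lv t = lv s + length g" using g by (simp add: lv_def min_def)
    then show "s \<in> {s \<in> bx N. \<exists>g. length g = N - lv s \<and> t = (fst s @ g, snd s @ g)}"
      using True g by (auto simp: bx_def Ubox_def prod_eq_iff)
  qed
next
  case False
  have H: "False" if "s \<in> bx N" "length g = N - lv s" "t = (fst s @ g, snd s @ g)" for s g
  proof -
    have "lv t = lv s + length g" using that by (simp add: lv_def min_def)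
    then show False using that False by (auto simp: bx_def Ubox_def)
  qed
  then show ?thesis using False H by (simp only: if_False) blast
qed

lemma Xf_sum: "Xf a N = (\<lambda>t. \<Sum>s\<in>bx N. a s * (l1delta s t - pad (N - lv s) s t))"
proof
  fix t
  have 1: "(\<Sum>s\<in>bx N. a s * l1delta s t) = (if t \<in> bx N then a t else 0)"
    by (simp add: l1delta_def bx_finite if_distrib cong: if_cong)
  have "(\<Sum>s\<in>bx N. a s * pad (N - lv s) s t) = (\<Sum>s\<in>{s \<in> bx N. \<exists>g. length g = N - lv s \<and> t = (fst s @ g, snd s @ g)}. a s)"
    by (simp add: pad_val sum.inter_filter[OF bx_finite, symmetric] if_distrib cong: if_cong)
  also have "\<dots> = Yf a N t" by (simp add: bx_pad_set Yf_def)
  finally show "Xf a N t = (\<Sum>s\<in>bx N. a s * (l1delta s t - pad (N - lv s) s t))"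
    using 1 by (simp add: Xf_def right_diff_distrib sum_subtractf)
qed

lemma Xf_J: "Xf a N \<in> J"
  unfolding Xf_sum by (intro J_sum bx_finite J_scal pad_J)

definition wrd :: "nat \<Rightarrow> bool list" where "wrd M = replicate M False @ [True]"

lemma nth_w: "i < length xs + M + 1 \<Longrightarrow> (xs @ wrd M) ! i = (if i < length xs then xs ! i else if i < length xs + M then False else True)"
  by (auto simp: wrd_def nth_append)

lemma len_w[simp]: "length (wrd M) = M + 1" by (simp add: wrd_def)

lemma E_char: "m3 ([],P) s (Q,[]) = Some cu_e \<longleftrightarrow> (\<exists>g. P = fst s @ g \<and> Q = snd s @ g)"
proof -
  obtain a b where s: "s = (a,b)" by fastforce
  show ?thesis
    unfolding m3_def mo_eq_Some_L s
    apply (simp add: cu_e_def)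
    apply (auto simp: cu_mult_char)
    done
qed

lemma R_big:
  assumes v: "m3 ([], fst u @ wrd M) s (snd u @ wrd M, []) = Some v"
    and lu: "length (fst u) \<le> 2*N" "length (snd u) \<le> 2*N"
    and ls: "length (fst s) \<le> L" "length (snd s) \<le> L"
    and M: "2*L + 2*N + 1 \<le> M"
  shows "v = cu_e"
proof -
  obtain \<alpha> \<beta> where s: "s = (\<alpha>,\<beta>)" by fastforce
  obtain \<mu> \<nu> where u: "u = (\<mu>,\<nu>)" by fastforce
  define P where "P = \<mu> @ wrd M"
  define Q where "Q = \<nu> @ wrd M"
  obtain r where r1: "cu_mult ([],P) (\<alpha>,\<beta>) = Some r" and r2: "cu_mult r (Q,[]) = Some v"
    using v unfolding m3_def mo_eq_Some_L s u P_def Q_def by auto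
  have lP: "length P = length \<mu> + M + 1" by (simp add: P_def)
  have lQ: "length Q = length \<nu> + M + 1" by (simp add: Q_def)
  from r1[unfolded cu_mult_char] have "\<exists>g. P = \<alpha> @ g \<and> r = ([], \<beta> @ g)"
  proof
    assume "\<exists>g. \<alpha> = P @ g \<and> r = ([] @ g, \<beta>)"
    then have "length \<alpha> \<ge> length P" by auto
    then show ?thesis using lP ls s M by simp
  qed
  then obtain g where Pg: "P = \<alpha> @ g" and r: "r = ([], \<beta> @ g)" by blast
  have lg: "length g = length \<mu> + M + 1 - length \<alpha>" using Pg lP by simp
  have lg0: "length g \<noteq> 0" using lg ls s M by simp
  then have gne: "g \<noteq> []" by auto
  have lastg: "(\<beta> @ g) ! (length (\<beta> @ g) - 1) = True"
  proof -
    have ge: "\<not> (length \<beta> + length g - 1 < length \<beta>)" using lg0 by linarith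
    have ge2: "\<not> (length \<alpha> + length g - 1 < length \<alpha>)" using lg0 by linarith
    have "(\<beta> @ g) ! (length (\<beta> @ g) - 1) = g ! (length g - 1)" using ge by (simp add: nth_append)
    also have "\<dots> = P ! (length P - 1)" using Pg ge2 by (simp add: nth_append)
    also have "\<dots> = True" unfolding P_def by (simp add: wrd_def nth_append)
    finally show ?thesis .
  qed
  from r2[unfolded r cu_mult_char]
  consider (A) h where "Q = (\<beta> @ g) @ h" "v = ([] @ h, [])" | (B) h where "\<beta> @ g = Q @ h" "v = ([], [] @ h)"
    by blast
  then show ?thesis
  proof cases
    case A
    show ?thesis
    proof (rule ccontr)
      assume "v \<noteq> cu_e"
      then have hne: "h \<noteq> []" using A by (auto simp: cu_e_def)
      define i where "i = length (\<beta> @ g) - 1"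
      have li: "length (\<beta> @ g) + length h = length Q" using A by simp
      have hl: "length h \<ge> 1" using hne by (cases h) auto
      have i1: "i < length \<nu> + M" unfolding i_def length_append using li[unfolded length_append] lQ hl lg0 by linarith
      have i2: "i \<ge> length \<nu>" using lg ls s M lu u unfolding i_def by simp
      have "Q ! i = (\<beta> @ g) ! i" using A gne unfolding i_def by (simp add: nth_append)
      also have "\<dots> = True" using lastg i_def by simp
      finally have "Q ! i = True" .
      moreover have "Q ! i = False" unfolding Q_def using i1 i2 by (subst nth_w) auto
      ultimately show False by simp
    qed
  next
    case B
    show ?thesis
    proof (rule ccontr)
      assume "v \<noteq> cu_e"
      then have hne: "h \<noteq> []" using B by (auto simp: cu_e_def)
      define i0 where "i0 = length \<nu> + M"
      have lb: "length \<beta> + length g = length Q + length h" using arg_cong[OF B(1), of length] by simp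
      have "(Q @ h) ! i0 = True" unfolding i0_def Q_def by (simp add: wrd_def nth_append)
      moreover have "(\<beta> @ g) ! i0 = False"
      proof -
        have ib: "length \<beta> \<le> i0" using ls s M unfolding i0_def by simp
        have hl: "length h \<ge> 1" using hne by (cases h) auto
        have ig: "i0 - length \<beta> < length g" using lb lQ hl ib unfolding i0_def by linarith
        have "(\<beta> @ g) ! i0 = g ! (i0 - length \<beta>)" using ib by (simp add: nth_append)
        also have "\<dots> = P ! (length \<alpha> + (i0 - length \<beta>))" using Pg ig by (simp add: nth_append)
        also have "\<dots> = False"
        proof -
          have hpos: "length h \<ge> 1" using hne by (cases h) auto
          have j1: "length \<alpha> + (i0 - length \<beta>) \<ge> length \<mu>" using ls s M lu u ib unfolding i0_def by simp
          have j2: "length \<alpha> + (i0 - length \<beta>) < length \<mu> + M" using lb lQ lg hpos ib Pg lP unfolding i0_def by simp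
          show ?thesis unfolding P_def using j1 j2 by (subst nth_w) auto
        qed
        finally show ?thesis .
      qed
      ultimately show False using B by simp
    qed
  qed
qed


definition Es :: "cu2 \<Rightarrow> nat \<Rightarrow> cu2 set" where
  "Es u M = {s. \<exists>g. fst u @ wrd M = fst s @ g \<and> snd u @ wrd M = snd s @ g}"

lemma Es_finite: "finite (Es u M)"
  by (rule finite_subset[OF _ fin2[of "length (fst u) + M + 1" "length (snd u) + M + 1"]])
     (auto simp: Es_def dest!: arg_cong[where f=length])

lemma Es_m3: "Es u M = {s. m3 ([], fst u @ wrd M) s (snd u @ wrd M, []) = Some cu_e}"
  by (simp add: Es_def E_char)

lemma anc_E:
  assumes u: "u \<in> Ubox N"
  shows "anc u = {s \<in> Es u M. lv s \<le> N}"
proof (intro equalityI subsetI)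
  fix s assume "s \<in> anc u"
  then obtain g where g: "fst u = fst s @ g" "snd u = snd s @ g" by (auto simp: anc_def)
  have "lv u = lv s + length g" using g by (simp add: lv_def min_def)
  then show "s \<in> {s \<in> Es u M. lv s \<le> N}" using u g by (auto simp: Es_def Ubox_def)
next
  fix s assume "s \<in> {s \<in> Es u M. lv s \<le> N}"
  then obtain g where g: "fst u @ wrd M = fst s @ g" "snd u @ wrd M = snd s @ g" and ls: "lv s \<le> N"
    by (auto simp: Es_def)
  have l1: "length (fst u) + M + 1 = length (fst s) + length g" using arg_cong[OF g(1), of length] by simp
  have l2: "length (snd u) + M + 1 = length (snd s) + length g" using arg_cong[OF g(2), of length] by simp
  have N: "lv u = N" using u by (simp add: Ubox_def)
  have a1: "length (fst s) \<le> length (fst u)"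
    using l1 l2 ls N unfolding lv_def min_def by (auto split: if_splits)
  have a2: "length (snd s) \<le> length (snd u)" using a1 l1 l2 by linarith
  have e1: "fst u = fst s @ drop (length (fst s)) (fst u)"
    using arg_cong[OF g(1), of "take (length (fst s))"] a1 by simp (metis append_take_drop_id)
  have e2: "snd u = snd s @ drop (length (snd s)) (snd u)"
    using arg_cong[OF g(2), of "take (length (snd s))"] a2 by simp (metis append_take_drop_id)
  have "drop (length (fst s)) (fst u) @ wrd M = g"
    using arg_cong[OF g(1), of "drop (length (fst s))"] a1 by simp
  moreover have "drop (length (snd s)) (snd u) @ wrd M = g"
    using arg_cong[OF g(2), of "drop (length (snd s))"] a2 by simp
  ultimately have "drop (length (fst s)) (fst u) = drop (length (snd s)) (snd u)" by (metis append_same_eq)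
  then show "s \<in> anc u" unfolding anc_def using e1 e2 by auto
qed

lemma E_disj:
  assumes u: "u \<in> Ubox N" and u': "u' \<in> Ubox N" and s: "s \<in> Es u M" "s \<in> Es u' M" and ls: "lv s > N"
  shows "u = u'"
proof -
  have key: "length (fst v) + lv s = length (fst s) + N \<and> length (snd v) + lv s = length (snd s) + N \<and>
             fst v = take (length (fst v)) (fst s) \<and> snd v = take (length (snd v)) (snd s)"
    if v: "v \<in> Ubox N" "s \<in> Es v M" for v
  proof -
    obtain g where g: "fst v @ wrd M = fst s @ g" "snd v @ wrd M = snd s @ g" using v by (auto simp: Es_def)
    have l1: "length (fst v) + M + 1 = length (fst s) + length g" using arg_cong[OF g(1), of length] by simp
    have l2: "length (snd v) + M + 1 = length (snd s) + length g" using arg_cong[OF g(2), of length] by simp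
    have N: "lv v = N" using v by (simp add: Ubox_def)
    have A: "length (fst v) + lv s = length (fst s) + N \<and> length (snd v) + lv s = length (snd s) + N"
      using l1 l2 N unfolding lv_def min_def by (auto split: if_splits)
    then have b1: "length (fst v) \<le> length (fst s)" "length (snd v) \<le> length (snd s)" using ls by auto
    have "fst v = take (length (fst v)) (fst s)"
      using arg_cong[OF g(1), of "take (length (fst v))"] b1 by simp
    moreover have "snd v = take (length (snd v)) (snd s)"
      using arg_cong[OF g(2), of "take (length (snd v))"] b1 by simp
    ultimately show ?thesis using A by blast
  qed
  from key[OF u s(1)] key[OF u' s(2)] show ?thesis by (metis add_right_cancel prod_eq_iff)
qed

lemma compl_infsum:
  fixes h :: "'a \<Rightarrow> real"
  assumes hs: "h summable_on UNIV" and F: "finite F"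
  shows "(\<Sum>\<^sub>\<infinity>x\<in>-F. h x) = (\<Sum>\<^sub>\<infinity>x. h x) - sum h F"
proof -
  have "(\<Sum>\<^sub>\<infinity>x. h x) = (\<Sum>\<^sub>\<infinity>x\<in>F \<union> -F. h x)" by simp
  also have "\<dots> = (\<Sum>\<^sub>\<infinity>x\<in>F. h x) + (\<Sum>\<^sub>\<infinity>x\<in>-F. h x)"
    by (rule infsum_Un_disjoint) (auto intro: summable_on_subset[OF hs] simp: F)
  finally show ?thesis using F by simp
qed

lemma tail0:
  fixes h :: "'a \<Rightarrow> real"
  assumes hs: "h summable_on UNIV" and h0: "\<And>x. h x \<ge> 0"
    and ex: "\<And>F. finite F \<Longrightarrow> \<exists>n. F \<subseteq> K n" and mono: "\<And>n m. n \<le> m \<Longrightarrow> K n \<subseteq> K m"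
  shows "(\<lambda>n. \<Sum>\<^sub>\<infinity>x\<in>-K n. h x) \<longlonglongrightarrow> 0"
proof (rule LIMSEQ_I)
  fix r :: real assume r: "r > 0"
  obtain F where F: "finite F" "dist (sum h F) (\<Sum>\<^sub>\<infinity>x. h x) \<le> r/2"
    using infsum_finite_approximation[OF hs, of "r/2"] r by auto
  obtain n0 where n0: "F \<subseteq> K n0" using ex[OF F(1)] by blast
  show "\<exists>no. \<forall>n\<ge>no. norm ((\<Sum>\<^sub>\<infinity>x\<in>-K n. h x) - 0) < r"
  proof (intro exI allI impI)
    fix n assume "n \<ge> n0"
    then have FK: "F \<subseteq> K n" using n0 mono by blast
    have "(\<Sum>\<^sub>\<infinity>x\<in>-K n. h x) \<le> (\<Sum>\<^sub>\<infinity>x\<in>-F. h x)"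
      by (rule infsum_mono_neutral) (use FK h0 in \<open>auto intro: summable_on_subset[OF hs]\<close>)
    also have "\<dots> = (\<Sum>\<^sub>\<infinity>x. h x) - sum h F" by (rule compl_infsum[OF hs F(1)])
    also have "\<dots> \<le> r/2" using F(2) unfolding dist_real_def by linarith
    finally have "(\<Sum>\<^sub>\<infinity>x\<in>-K n. h x) \<le> r/2" .
    moreover have "(\<Sum>\<^sub>\<infinity>x\<in>-K n. h x) \<ge> 0" by (rule infsum_nonneg) (use h0 in auto)
    ultimately show "norm ((\<Sum>\<^sub>\<infinity>x\<in>-K n. h x) - 0) < r" using r by simp
  qed
qed

lemma sum_le_infsum:
  fixes h :: "'a \<Rightarrow> real"
  assumes "h summable_on A" "finite F" "F \<subseteq> A" "\<And>x. x \<in> A \<Longrightarrow> h x \<ge> 0"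
  shows "sum h F \<le> (\<Sum>\<^sub>\<infinity>x\<in>A. h x)"
proof -
  have "(\<Sum>\<^sub>\<infinity>x\<in>F. h x) \<le> (\<Sum>\<^sub>\<infinity>x\<in>A. h x)"
    by (rule infsum_mono_neutral) (use assms in auto)
  then show ?thesis using assms(2) by simp
qed

definition Cb :: "nat \<Rightarrow> cu2 set" where "Cb L = {s. length (fst s) \<le> L \<and> length (snd s) \<le> L}"

lemma finite_ex_Cb: "finite F \<Longrightarrow> \<exists>n. F \<subseteq> Cb n"
proof -
  assume F: "finite F"
  define n where "n = Max ((\<lambda>s. length (fst s) + length (snd s)) ` F)"
  have "length (fst s) + length (snd s) \<le> n" if "s \<in> F" for s
    unfolding n_def using F that by (intro Max_ge) auto
  then show ?thesis by (fastforce simp: Cb_def intro!: exI[of _ n])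
qed

lemma finite_ex_bx: "finite F \<Longrightarrow> \<exists>n. F \<subseteq> bx n"
proof -
  assume F: "finite F"
  define n where "n = Max ((\<lambda>s. length (fst s) + length (snd s)) ` F)"
  have "length (fst s) + length (snd s) \<le> n" if "s \<in> F" for s
    unfolding n_def using F that by (intro Max_ge) auto
  then show ?thesis by (fastforce simp: bx_def lv_def intro!: exI[of _ n])
qed

lemma bx_mono: "n \<le> m \<Longrightarrow> bx n \<subseteq> bx m"
  by (auto simp: bx_def)

lemma Cb_mono: "n \<le> m \<Longrightarrow> Cb n \<subseteq> Cb m"
  by (auto simp: Cb_def)


abbreviation failing :: "(cu2 \<Rightarrow> complex) \<Rightarrow> bool" where
  "failing a \<equiv> (\<forall>B C. norm (\<Sum>\<^sub>\<infinity>s\<in>{s. m3 B s C = Some cu_e}. a s)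
                   \<le> (\<Sum>\<^sub>\<infinity>s\<in>{s. \<exists>u\<in>-{cu_e}. m3 B s C = Some u}. norm (a s)))"

lemma nm_Yf: "nm (Yf a N) = (\<Sum>u\<in>Ubox N. norm (\<Sum>s\<in>anc u. a s))"
proof -
  have "nm (Yf a N) = (\<Sum>\<^sub>\<infinity>u\<in>Ubox N. norm (Yf a N u))"
    unfolding nm_def by (rule infsum_cong_neutral) (auto simp: Yf_def)
  also have "\<dots> = (\<Sum>u\<in>Ubox N. norm (\<Sum>s\<in>anc u. a s))"
    using Ubx_finite by (simp add: Yf_def)
  finally show ?thesis .
qed

lemma Yf_l1A: "Yf a N \<in> l1A"
proof -
  have "(\<lambda>u. norm (Yf a N u)) summable_on Ubox N" using Ubx_finite by simp
  then show ?thesis unfolding l1A_def mem_Collect_eq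
    by (rule summable_on_cong_neutral[THEN iffD1, rotated -1]) (auto simp: Yf_def)
qed

lemma Y_bound:
  assumes a: "a \<in> l1A" and fail: "failing a"
  shows "nm (Yf a N) \<le> (\<Sum>\<^sub>\<infinity>s\<in>-bx N. norm (a s))"
proof (rule field_le_epsilon)
  fix e :: real assume e: "e > 0"
  define h where "h s = norm (a s)" for s
  have hs: "h summable_on UNIV" using a unfolding h_def[abs_def] l1A_def by simp
  have h0: "h s \<ge> 0" for s by (simp add: h_def)
  define c where "c = card (Ubox N)"
  have lim: "(\<lambda>L. \<Sum>\<^sub>\<infinity>s\<in>-Cb L. h s) \<longlonglongrightarrow> 0"
    by (rule tail0[OF hs h0, of Cb]) (erule finite_ex_Cb, erule Cb_mono)
  have ep: "e / (c+1) > 0" using e by simp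
  obtain L where L0: "\<forall>n\<ge>L. norm ((\<Sum>\<^sub>\<infinity>s\<in>-Cb n. h s) - 0) < e / (c+1)"
    using LIMSEQ_D[OF lim ep] by blast
  have L: "(\<Sum>\<^sub>\<infinity>s\<in>-Cb L. h s) < e / (c+1)"
    using L0[rule_format, of L] by simp
  have TL0: "(\<Sum>\<^sub>\<infinity>s\<in>-Cb L. h s) \<ge> 0" by (rule infsum_nonneg) (simp add: h0)
  have cTL: "c * (\<Sum>\<^sub>\<infinity>s\<in>-Cb L. h s) \<le> e"
  proof -
    have "c * (\<Sum>\<^sub>\<infinity>s\<in>-Cb L. h s) \<le> (c+1) * (\<Sum>\<^sub>\<infinity>s\<in>-Cb L. h s)" using TL0 by (simp add: algebra_simps)
    also have "\<dots> \<le> (c+1) * (e/(c+1))" using L by (intro mult_left_mono) auto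
    also have "\<dots> = e" by simp
    finally show ?thesis .
  qed
  define M where "M = 2*L + 2*N + 1"
  define D where "D u = {s \<in> Es u M. \<not> lv s \<le> N}" for u
  have Dfin: "finite (D u)" for u unfolding D_def using Es_finite by simp
  have each: "norm (\<Sum>s\<in>anc u. a s) \<le> (\<Sum>\<^sub>\<infinity>s\<in>-Cb L. h s) + sum h (D u)" if u: "u \<in> Ubox N" for u
  proof -
    have split: "(\<Sum>s\<in>Es u M. a s) = (\<Sum>s\<in>anc u. a s) + (\<Sum>s\<in>D u. a s)"
    proof -
      have "(\<Sum>s\<in>Es u M. a s) = (\<Sum>s\<in>Es u M \<inter> {s. lv s \<le> N}. a s) + (\<Sum>s\<in>Es u M - {s. lv s \<le> N}. a s)"
        by (rule sum.Int_Diff[OF Es_finite])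
      moreover have "Es u M \<inter> {s. lv s \<le> N} = anc u" using anc_E[OF u, of M] by auto
      moreover have "Es u M - {s. lv s \<le> N} = D u" by (auto simp: D_def)
      ultimately show ?thesis by simp
    qed
    have f: "norm (\<Sum>s\<in>Es u M. a s) \<le> (\<Sum>\<^sub>\<infinity>s\<in>-Cb L. h s)"
    proof -
      define B where "B = (([]::bool list), fst u @ wrd M)"
      define C where "C = (snd u @ wrd M, ([]::bool list))"
      have "norm (\<Sum>\<^sub>\<infinity>s\<in>{s. m3 B s C = Some cu_e}. a s) \<le> (\<Sum>\<^sub>\<infinity>s\<in>{s. \<exists>v\<in>-{cu_e}. m3 B s C = Some v}. h s)"
        using fail unfolding h_def by blast
      moreover have "{s. m3 B s C = Some cu_e} = Es u M" by (simp add: Es_m3 B_def C_def)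
      moreover have sub: "{s. \<exists>v\<in>-{cu_e}. m3 B s C = Some v} \<subseteq> -Cb L" (is "?R \<subseteq> _")
      proof
        fix s assume "s \<in> ?R"
        then obtain v where v: "v \<noteq> cu_e" "m3 B s C = Some v" by auto
        show "s \<in> -Cb L"
        proof
          assume "s \<in> Cb L"
          then have "v = cu_e"
            using R_big[OF v(2)[unfolded B_def C_def], of N L] u by (auto simp: Cb_def Ubox_def M_def)
          with v show False by simp
        qed
      qed
      moreover have "(\<Sum>\<^sub>\<infinity>s\<in>{s. \<exists>v\<in>-{cu_e}. m3 B s C = Some v}. h s) \<le> (\<Sum>\<^sub>\<infinity>s\<in>-Cb L. h s)"
        by (rule infsum_mono_neutral) (use sub in \<open>auto intro: summable_on_subset[OF hs] simp: h0\<close>)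
      ultimately show ?thesis using Es_finite by (simp add: infsum_finite) 
    qed
    have "norm (\<Sum>s\<in>anc u. a s) \<le> norm (\<Sum>s\<in>Es u M. a s) + norm (\<Sum>s\<in>D u. a s)"
      using split by (metis add_diff_cancel_right' norm_triangle_ineq4)
    also have "norm (\<Sum>s\<in>D u. a s) \<le> sum h (D u)" unfolding h_def by (rule norm_sum)
    finally show ?thesis using f by simp
  qed
  have "nm (Yf a N) \<le> (\<Sum>u\<in>Ubox N. (\<Sum>\<^sub>\<infinity>s\<in>-Cb L. h s) + sum h (D u))"
    unfolding nm_Yf by (rule sum_mono) (rule each)
  also have "\<dots> = c * (\<Sum>\<^sub>\<infinity>s\<in>-Cb L. h s) + (\<Sum>u\<in>Ubox N. sum h (D u))"
    by (simp add: sum.distrib c_def)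
  also have "(\<Sum>u\<in>Ubox N. sum h (D u)) = sum h (\<Union>u\<in>Ubox N. D u)"
  proof (rule sum.UNION_disjoint[symmetric])
    show "\<forall>i\<in>Ubox N. \<forall>j\<in>Ubox N. i \<noteq> j \<longrightarrow> D i \<inter> D j = {}"
      using E_disj unfolding D_def by fastforce
  qed (auto simp: Ubx_finite Dfin)
  also have "sum h (\<Union>u\<in>Ubox N. D u) \<le> (\<Sum>\<^sub>\<infinity>s\<in>-bx N. h s)"
  proof (rule sum_le_infsum)
    show "(\<Union>u\<in>Ubox N. D u) \<subseteq> -bx N" by (auto simp: D_def bx_def)
  qed (auto intro: summable_on_subset[OF hs] simp: h0 Ubx_finite Dfin)
  finally show "nm (Yf a N) \<le> (\<Sum>\<^sub>\<infinity>s\<in>-bx N. norm (a s)) + e" using cTL by (simp add: h_def)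
qed


lemma failure:
  assumes a: "a \<in> l1A" and fail: "failing a"
  shows "a \<in> J"
proof -
  define T where "T N = (\<Sum>\<^sub>\<infinity>s\<in>-bx N. norm (a s))" for N
  have hs: "(\<lambda>s. norm (a s)) summable_on UNIV" using a by (simp add: l1A_def)
  have T0: "T \<longlonglongrightarrow> 0" unfolding T_def
    by (rule tail0[OF hs norm_ge_zero, of bx]) (erule finite_ex_bx, erule bx_mono)
  have Tnn: "T N \<ge> 0" for N unfolding T_def by (rule infsum_nonneg) simp
  have bound: "l1norm (\<lambda>s. Xf a N s - a s) \<le> 2 * T N" for N
  proof -
    define ob where "ob s = (if s \<in> bx N then 0 else norm (a s))" for s
    have os: "ob summable_on UNIV"
    proof -
      have "(\<lambda>s. norm (a s)) summable_on -bx N" by (rule summable_on_subset[OF hs]) auto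
      then show ?thesis by (rule summable_on_cong_neutral[THEN iffD1, rotated -1]) (auto simp: ob_def)
    qed
    have oT: "(\<Sum>\<^sub>\<infinity>s. ob s) = T N"
      unfolding T_def by (rule infsum_cong_neutral) (auto simp: ob_def)
    have Ys: "(\<lambda>s. norm (Yf a N s)) summable_on UNIV" using Yf_l1A by (simp add: l1A_def)
    have pt: "norm (Xf a N s - a s) \<le> ob s + norm (Yf a N s)" for s
      by (auto simp: Xf_def ob_def norm_minus_commute norm_triangle_ineq)
    have "l1norm (\<lambda>s. Xf a N s - a s) \<le> (\<Sum>\<^sub>\<infinity>s. ob s + norm (Yf a N s))"
      unfolding l1norm_def
    proof (rule infsum_mono[OF _ _ pt])
      show "(\<lambda>s. ob s + norm (Yf a N s)) summable_on UNIV" by (rule summable_on_add[OF os Ys])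
      then show "(\<lambda>s. norm (Xf a N s - a s)) summable_on UNIV"
        by (rule Infinite_Sum.abs_summable_on_comparison_test'[THEN summable_on_iff_abs_summable_on_real[THEN iffD2]]) (use pt in auto)
    qed
    also have "\<dots> = T N + nm (Yf a N)" by (simp add: infsum_add[OF os Ys] oT nm_def)
    also have "\<dots> \<le> 2 * T N" using Y_bound[OF a fail, of N] by (simp add: T_def)
    finally show ?thesis .
  qed
  have lim: "(\<lambda>N. l1norm (\<lambda>s. Xf a N s - a s)) \<longlonglongrightarrow> 0"
  proof (rule tendsto_sandwich[of "\<lambda>_. 0" _ _ "\<lambda>N. 2 * T N"])
    show "\<forall>\<^sub>F n in sequentially. 0 \<le> l1norm (\<lambda>s. Xf a n s - a s)"
      by (simp add: l1norm_def infsum_nonneg)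
    show "\<forall>\<^sub>F n in sequentially. l1norm (\<lambda>s. Xf a n s - a s) \<le> 2 * T n" using bound by simp
    show "(\<lambda>N. 2 * T N) \<longlonglongrightarrow> 0" using tendsto_mult_right_zero[OF T0, of 2] by simp
  qed simp
  show ?thesis using J_closed a Xf_J lim unfolding l1_closed_def by blast
qed

definition tau :: "cu2 option \<Rightarrow> complex" where
  "tau x = (case x of None \<Rightarrow> 0 | Some (a,b) \<Rightarrow> if a = b then (1/2) ^ length a else 0)"

lemma tau_bound: "norm (tau x) \<le> 1"
  by (auto simp: tau_def norm_power power_le_one split: option.splits)

definition Phi :: "cu2 option \<Rightarrow> cu2 option \<Rightarrow> (cu2 \<Rightarrow> complex) \<Rightarrow> complex" where
  "Phi x y f = (\<Sum>\<^sub>\<infinity>s. f s * tau (mo (mo x (Some s)) y))"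

lemma Phi_summable: "f \<in> l1A \<Longrightarrow> (\<lambda>s. f s * tau (mo (mo x (Some s)) y)) summable_on A"
proof (rule abs_summable_summable)
  assume f: "f \<in> l1A"
  show "(\<lambda>s. norm (f s * tau (mo (mo x (Some s)) y))) summable_on A"
  proof (rule Infinite_Sum.abs_summable_on_comparison_test'[where g="\<lambda>s. norm (f s)"])
    show "(\<lambda>s. norm (f s)) summable_on A" by (rule l1A_norm_summable[OF f])
    show "norm (f s * tau (mo (mo x (Some s)) y)) \<le> norm (f s)" for s
      using tau_bound mult_left_le[of _ "norm (f s)"] by (simp add: norm_mult)
  qed
qed

lemma Phi_bound: "f \<in> l1A \<Longrightarrow> norm (Phi x y f) \<le> nm f"
  unfolding Phi_def nm_def
proof (rule norm_infsum_bound[THEN order_trans])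
  assume f: "f \<in> l1A"
  show "(\<lambda>s. norm (f s * tau (mo (mo x (Some s)) y))) summable_on UNIV"
    using Phi_summable[OF f] by (simp add: summable_on_iff_abs_summable_on_complex)
  show "(\<Sum>\<^sub>\<infinity>s. norm (f s * tau (mo (mo x (Some s)) y))) \<le> (\<Sum>\<^sub>\<infinity>s. norm (f s))"
  proof (rule infsum_mono)
    show "(\<lambda>s. norm (f s * tau (mo (mo x (Some s)) y))) summable_on UNIV"
      using Phi_summable[OF f] by (simp add: summable_on_iff_abs_summable_on_complex)
    show "(\<lambda>s. norm (f s)) summable_on UNIV" using f by (simp add: l1A_def)
    show "norm (f s * tau (mo (mo x (Some s)) y)) \<le> norm (f s)" for s
      using tau_bound mult_left_le[of _ "norm (f s)"] by (simp add: norm_mult)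
  qed
qed

lemma Phi_diff: "f \<in> l1A \<Longrightarrow> g \<in> l1A \<Longrightarrow> Phi x y (\<lambda>s. f s - g s) = Phi x y f - Phi x y g"
  unfolding Phi_def left_diff_distrib
  using infsum_add[OF Phi_summable[of f] summable_on_uminus[THEN iffD2, OF Phi_summable[of g]]]
  by (simp add: infsum_uminus)

lemma Phi_add: "f \<in> l1A \<Longrightarrow> g \<in> l1A \<Longrightarrow> Phi x y (\<lambda>s. f s + g s) = Phi x y f + Phi x y g"
  unfolding Phi_def distrib_right
  using infsum_add[OF Phi_summable[of f] Phi_summable[of g]] by simp

lemma Phi_scal: "Phi x y (\<lambda>s. c * f s) = c * Phi x y f"
  unfolding Phi_def by (simp add: infsum_cmult_right' mult.assoc)

lemma l1A_sum: "finite S \<Longrightarrow> (\<And>i. i \<in> S \<Longrightarrow> F i \<in> l1A) \<Longrightarrow> (\<lambda>t. \<Sum>i\<in>S. F i t) \<in> l1A"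
proof (induction S rule: finite_induct)
  case empty then show ?case by (simp add: l1A_zero)
next
  case (insert j S) then show ?case by (simp add: l1A_add)
qed

lemma Phi_sum: "finite S \<Longrightarrow> (\<And>i. i \<in> S \<Longrightarrow> F i \<in> l1A) \<Longrightarrow> Phi x y (\<lambda>t. \<Sum>i\<in>S. F i t) = (\<Sum>i\<in>S. Phi x y (F i))"
proof (induction S rule: finite_induct)
  case empty then show ?case by (simp add: Phi_def)
next
  case (insert j S)
  have "(\<lambda>t. \<Sum>i\<in>S. F i t) \<in> l1A"
    using insert by (intro l1A_sum) auto
  then show ?case using insert by (simp add: Phi_add)
qed

definition Iset :: "(cu2 \<Rightarrow> complex) set" where
  "Iset = {f \<in> l1A. \<forall>x y. Phi x y f = 0}"

lemma Phi_delta: "Phi x y (l1delta s) = tau (mo (mo x (Some s)) y)"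
proof -
  have "Phi x y (l1delta s) = (\<Sum>\<^sub>\<infinity>t\<in>{s}. l1delta s t * tau (mo (mo x (Some t)) y))"
    unfolding Phi_def by (rule infsum_cong_neutral) (auto simp: l1delta_def)
  then show ?thesis by (simp add: l1delta_def)
qed

lemma mo_None_right[simp]: "mo x None = None" by (cases x) auto

lemma tau_pad: "tau (mo (mo x (Some cu_e)) y) = tau (mo (mo x (Some ([False],[False]))) y) + tau (mo (mo x (Some ([True],[True]))) y)"
proof (cases x; cases y)
  fix p q assume x: "x = Some p" and y: "y = Some q"
  obtain a b where p: "p = (a,b)" by fastforce
  obtain c d where q: "q = (c,d)" by fastforce
  show ?thesis
  proof (cases b)
    case (Cons b0 b')
    then show ?thesis using x y p q by (cases b0) (auto simp: cu_mult_def cu_e_def take_Cons' tau_def)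
  next
    case Nil
    show ?thesis
    proof (cases c)
      case (Cons c0 c')
      then show ?thesis using x y p q Nil by (cases c0) (auto simp: cu_mult_def cu_e_def take_Cons' tau_def)
    next
      case Nil2: Nil
      show ?thesis using x y p q Nil Nil2 by (auto simp: cu_mult_def cu_e_def tau_def)
    qed
  qed
qed (auto simp: tau_def)

lemma f0_I: "f0 \<in> Iset"
proof -
  have "Phi x y f0 = 0" for x y
  proof -
    have "Phi x y f0 = Phi x y (l1delta cu_e) - Phi x y (l1delta ([False],[False])) - Phi x y (l1delta ([True],[True]))"
      unfolding f0_eq by (simp add: Phi_diff l1A_diff delta_l1A)
    then show ?thesis by (simp add: Phi_delta tau_pad)
  qed
  then show ?thesis using f0_l1A by (simp add: Iset_def)
qed


lemma mo_assoc3: "mo x (mo (Some a) (Some b)) = mo (mo x (Some a)) (Some b)"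
  by (simp only: mo_assoc)

lemma Phi_conv:
  assumes g: "g \<in> l1A" and f: "f \<in> l1A"
  shows "Phi x y (g #\<^sub>\<ell> f) = (\<Sum>\<^sub>\<infinity>p. g (fst p) * f (snd p) * tau (mo (mo (mo x (Some (fst p))) (Some (snd p))) y))"
proof -
  define h where "h p = g (fst p) * f (snd p)" for p
  have hs: "(\<lambda>p. norm (h p)) summable_on UNIV"
    using prod_l1A(1)[of g f] g f by (simp add: h_def l1A_isl1 isl1_def)
  have "Phi x y (g #\<^sub>\<ell> f) = (\<Sum>\<^sub>\<infinity>u\<in>UNIV. tau (mo (mo x (Some u)) y) * (\<Sum>\<^sub>\<infinity>p\<in>{p. cu_mult (fst p) (snd p) = Some u}. h p))"
    unfolding Phi_def by (simp add: conv_eq h_def mult.commute)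
  also have "\<dots> = (\<Sum>\<^sub>\<infinity>p\<in>{p. \<exists>u\<in>UNIV. cu_mult (fst p) (snd p) = Some u}. tau (mo (mo x (Some (the (cu_mult (fst p) (snd p))))) y) * h p)"
    by (rule fiber_G_eq[OF hs, where B=1]) (rule tau_bound)
  also have "\<dots> = (\<Sum>\<^sub>\<infinity>p. g (fst p) * f (snd p) * tau (mo (mo (mo x (Some (fst p))) (Some (snd p))) y))"
  proof (rule infsum_cong_neutral)
    fix p assume "p \<in> UNIV - {p. \<exists>u\<in>UNIV. cu_mult (fst p) (snd p) = Some u}"
    then have "cu_mult (fst p) (snd p) = None" by (cases "cu_mult (fst p) (snd p)") auto
    then have "mo (mo x (Some (fst p))) (Some (snd p)) = None"
      using mo_assoc3[of x "fst p" "snd p"] by simp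
    then show "g (fst p) * f (snd p) * tau (mo (mo (mo x (Some (fst p))) (Some (snd p))) y) = 0"
      by (simp add: tau_def)
  next
    fix p assume "p \<in> {p. \<exists>u\<in>UNIV. cu_mult (fst p) (snd p) = Some u} \<inter> UNIV"
    then obtain u where u: "cu_mult (fst p) (snd p) = Some u" by auto
    then have "mo (mo x (Some (fst p))) (Some (snd p)) = mo x (Some u)"
      using mo_assoc3[of x "fst p" "snd p"] by simp
    then show "tau (mo (mo x (Some (the (cu_mult (fst p) (snd p))))) y) * h p = g (fst p) * f (snd p) * tau (mo (mo (mo x (Some (fst p))) (Some (snd p))) y)"
      using u by (simp add: h_def)
  qed auto
  finally show ?thesis .
qed

lemma Phi_conv_summable:
  assumes g: "g \<in> l1A" and f: "f \<in> l1A" and that: "\<And>p1 p2. norm (K p1 p2) \<le> 1"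
  shows "(\<lambda>(p1,p2). g p1 * f p2 * K p1 p2) summable_on UNIV \<times> UNIV"
proof -
  have hs: "(\<lambda>p. norm (g (fst p) * f (snd p))) summable_on UNIV"
    using prod_l1A(1)[of g f] g f by (simp add: l1A_isl1 isl1_def)
  have "(\<lambda>p. norm (g (fst p) * f (snd p) * K (fst p) (snd p))) summable_on UNIV"
  proof (rule Infinite_Sum.abs_summable_on_comparison_test'[OF hs])
    fix x :: "cu2 \<times> cu2"
    show "norm (g (fst x) * f (snd x) * K (fst x) (snd x)) \<le> norm (g (fst x) * f (snd x))"
      using that[of "fst x" "snd x"] mult_left_le[of "norm (K (fst x) (snd x))" "norm (g (fst x) * f (snd x))"]
      by (simp add: norm_mult)
  qed
  then have "(\<lambda>p. g (fst p) * f (snd p) * K (fst p) (snd p)) summable_on UNIV"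
    by (rule abs_summable_summable)
  then show ?thesis by (simp add: case_prod_unfold)
qed

lemma Phi_conv_left:
  assumes a: "a \<in> l1A" and f: "f \<in> l1A"
  shows "Phi x y (a #\<^sub>\<ell> f) = (\<Sum>\<^sub>\<infinity>p. a p * Phi (mo x (Some p)) y f)"
proof -
  have S: "(\<lambda>(p1,p2). a p1 * f p2 * tau (mo (mo (mo x (Some p1)) (Some p2)) y)) summable_on UNIV \<times> UNIV"
    by (rule Phi_conv_summable[OF a f]) (rule tau_bound)
  have "Phi x y (a #\<^sub>\<ell> f) = (\<Sum>\<^sub>\<infinity>(p1,p2)\<in>UNIV\<times>UNIV. a p1 * f p2 * tau (mo (mo (mo x (Some p1)) (Some p2)) y))"
    by (simp add: Phi_conv[OF a f] case_prod_unfold)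
  also have "\<dots> = (\<Sum>\<^sub>\<infinity>p1. \<Sum>\<^sub>\<infinity>p2. a p1 * f p2 * tau (mo (mo (mo x (Some p1)) (Some p2)) y))"
    using infsum_Sigma'_banach[OF S] by simp
  also have "\<dots> = (\<Sum>\<^sub>\<infinity>p. a p * Phi (mo x (Some p)) y f)"
    unfolding Phi_def by (rule infsum_cong) (simp add: infsum_cmult_right' mult.assoc)
  finally show ?thesis .
qed

lemma Phi_conv_right:
  assumes a: "a \<in> l1A" and f: "f \<in> l1A"
  shows "Phi x y (f #\<^sub>\<ell> a) = (\<Sum>\<^sub>\<infinity>p. a p * Phi x (mo (Some p) y) f)"
proof -
  have S: "(\<lambda>(p1,p2). f p1 * a p2 * tau (mo (mo (mo x (Some p1)) (Some p2)) y)) summable_on UNIV \<times> UNIV"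
    by (rule Phi_conv_summable[OF f a]) (rule tau_bound)
  have "Phi x y (f #\<^sub>\<ell> a) = (\<Sum>\<^sub>\<infinity>(p1,p2)\<in>UNIV\<times>UNIV. f p1 * a p2 * tau (mo (mo (mo x (Some p1)) (Some p2)) y))"
    by (simp add: Phi_conv[OF f a] case_prod_unfold)
  also have "\<dots> = (\<Sum>\<^sub>\<infinity>p1. \<Sum>\<^sub>\<infinity>p2. f p1 * a p2 * tau (mo (mo (mo x (Some p1)) (Some p2)) y))"
    using infsum_Sigma'_banach[OF S] by simp
  also have "\<dots> = (\<Sum>\<^sub>\<infinity>p2. \<Sum>\<^sub>\<infinity>p1. f p1 * a p2 * tau (mo (mo (mo x (Some p1)) (Some p2)) y))"
    by (rule infsum_swap_banach) (use S in simp)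
  also have "\<dots> = (\<Sum>\<^sub>\<infinity>p. a p * Phi x (mo (Some p) y) f)"
    unfolding Phi_def
  proof (rule infsum_cong)
    fix p2
    have e: "mo (mo (mo x (Some p1)) (Some p2)) y = mo (mo x (Some p1)) (mo (Some p2) y)" for p1
      by (simp only: mo_assoc)
    show "(\<Sum>\<^sub>\<infinity>p1. f p1 * a p2 * tau (mo (mo (mo x (Some p1)) (Some p2)) y)) = a p2 * (\<Sum>\<^sub>\<infinity>s. f s * tau (mo (mo x (Some s)) (mo (Some p2) y)))"
      unfolding e infsum_cmult_right'[symmetric] by (simp add: ac_simps)
  qed
  finally show ?thesis .
qed

lemma I_ideal: "l1_ideal Iset"
proof -
  have 1: "Iset \<subseteq> l1A" by (auto simp: Iset_def)
  have 2: "(\<lambda>s. 0) \<in> Iset" by (simp add: Iset_def l1A_zero Phi_def)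
  have 3: "\<forall>f\<in>Iset. \<forall>g\<in>Iset. (\<lambda>s. f s + g s) \<in> Iset"
    by (auto simp: Iset_def Phi_add l1A_add)
  have 4: "\<forall>c::complex. \<forall>f\<in>Iset. (\<lambda>s. c * f s) \<in> Iset"
    by (auto simp: Iset_def Phi_scal l1A_scal)
  have 5: "\<forall>a\<in>l1A. \<forall>f\<in>Iset. a #\<^sub>\<ell> f \<in> Iset \<and> f #\<^sub>\<ell> a \<in> Iset"
  proof (intro ballI)
    fix a f assume a: "a \<in> l1A" and f: "f \<in> Iset"
    then have fl: "f \<in> l1A" and f0: "\<And>x y. Phi x y f = 0" by (auto simp: Iset_def)
    show "a #\<^sub>\<ell> f \<in> Iset \<and> f #\<^sub>\<ell> a \<in> Iset"
      using conv_l1A(1)[OF a fl] conv_l1A(1)[OF fl a] f0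
      by (auto simp: Iset_def Phi_conv_left[OF a fl] Phi_conv_right[OF a fl])
  qed
  show ?thesis unfolding l1_ideal_def using 1 2 3 4 5 by blast
qed

lemma I_closed: "l1_closed Iset"
  unfolding l1_closed_def
proof (intro allI impI)
  fix X f assume H: "(\<forall>n. X n \<in> Iset) \<and> f \<in> l1A \<and> (\<lambda>n. l1norm (\<lambda>s. X n s - f s)) \<longlonglongrightarrow> 0"
  then have X: "\<And>n. X n \<in> l1A" "\<And>n x y. Phi x y (X n) = 0" and f: "f \<in> l1A"
    and lim: "(\<lambda>n. l1norm (\<lambda>s. X n s - f s)) \<longlonglongrightarrow> 0" by (auto simp: Iset_def)
  have "Phi x y f = 0" for x y
  proof -
    have b: "norm (Phi x y f) \<le> l1norm (\<lambda>s. X n s - f s)" for n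
    proof -
      have "norm (Phi x y f) = norm (Phi x y (\<lambda>s. X n s - f s))"
        using Phi_diff[OF X(1) f, of x y n] X(2) by simp
      also have "\<dots> \<le> nm (\<lambda>s. X n s - f s)" by (rule Phi_bound) (rule l1A_diff[OF X(1) f])
      finally show ?thesis by (simp add: l1norm_nm)
    qed
    have "norm (Phi x y f) \<le> 0"
      by (rule LIMSEQ_le_const[OF lim]) (use b in blast)
    then show ?thesis by simp
  qed
  then show "f \<in> Iset" using f by (simp add: Iset_def)
qed

lemma J_sub_I: "J \<subseteq> Iset"
  by (rule J_least[OF I_ideal I_closed f0_I])

interpretation FV: vector_space "\<lambda>(c::complex) (v::nat \<Rightarrow> complex). (\<lambda>m. c * v m)"
  by unfold_locales (auto simp: fun_eq_iff algebra_simps)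

lemma fsum_apply: "(\<Sum>g\<in>F. (h g :: nat \<Rightarrow> complex)) m = (\<Sum>g\<in>F. h g m)"
  by (induction F rule: infinite_finite_induct) auto

lemma fd_contra:
  fixes V :: "'a \<Rightarrow> nat \<Rightarrow> complex"
  assumes F: "finite F" and sp: "\<And>n. \<exists>c. \<forall>m. (if m = n then 1 else 0) = (\<Sum>g\<in>F. c g * V g m)"
  shows False
proof -
  define e where "e n = (\<lambda>m::nat. if m = n then (1::complex) else 0)" for n
  have inj: "inj e" by (auto simp: inj_def e_def fun_eq_iff split: if_splits)
  have insp: "e n \<in> FV.span (V ` F)" for n
  proof -
    obtain c where c: "\<And>m. e n m = (\<Sum>g\<in>F. c g * V g m)" using sp[of n] by (auto simp: e_def)
    have "e n = (\<Sum>g\<in>F. (\<lambda>m. c g * V g m))" by (simp add: fun_eq_iff fsum_apply c)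
    also have "\<dots> \<in> FV.span (V ` F)"
      by (intro FV.span_sum FV.span_scale FV.span_base) auto
    finally show ?thesis .
  qed
  define A where "A = e ` {..card F}"
  have Afin: "finite A" by (simp add: A_def)
  have cardA: "card A = card F + 1" unfolding A_def by (subst card_image) (auto intro: inj_on_subset[OF inj])
  have ind: "FV.independent A"
  proof
    assume "FV.dependent A"
    then obtain u where u: "\<exists>v\<in>A. u v \<noteq> 0" "(\<Sum>v\<in>A. (\<lambda>m. u v * v m)) = 0"
      using FV.dependent_finite[OF Afin] by blast
    have "u v = 0" if v: "v \<in> A" for v
    proof -
      obtain n where n: "n \<le> card F" "v = e n" using v by (auto simp: A_def)
      have "0 = (\<Sum>v\<in>A. (\<lambda>m. u v * v m)) n" using u(2) by simp
      also have "\<dots> = (\<Sum>v\<in>A. u v * v n)" by (simp add: fsum_apply)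
      also have "\<dots> = (\<Sum>v\<in>{e n}. u v * v n)"
        by (rule sum.mono_neutral_right) (use n Afin in \<open>auto simp: A_def e_def split: if_splits\<close>)
      also have "\<dots> = u v" using n by (simp add: e_def)
      finally show ?thesis by simp
    qed
    with u(1) show False by blast
  qed
  have "A \<subseteq> FV.span (V ` F)" using insp by (auto simp: A_def)
  from FV.independent_span_bound[OF finite_imageI[OF F] ind this]
  have "card A \<le> card (V ` F)" by simp
  also have "\<dots> \<le> card F" by (rule card_image_le[OF F])
  finally show False using cardA by simp
qed


lemma L_en: "Phi (Some ([], replicate m False)) (Some cu_e) (l1delta (replicate n False, [])) = (if m = n then 1 else 0)"
proof (cases "m \<le> n")
  case True
  have "cu_mult ([], replicate m False) (replicate n False, []) = Some (replicate (n-m) False, [])"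
    using True by (simp add: cu_mult_def min_def)
  then show ?thesis using True by (simp add: Phi_delta cu_mult_e_right tau_def)
next
  case False
  have "cu_mult ([], replicate m False) (replicate n False, []) = Some ([], replicate (m-n) False)"
    using False by (simp add: cu_mult_def min_def)
  then show ?thesis using False by (simp add: Phi_delta cu_mult_e_right tau_def)
qed

lemma not_fd: "\<not> quot_finite_dim"
proof
  assume "quot_finite_dim"
  then obtain F where F: "finite F" "F \<subseteq> l1A"
    and H: "\<And>f. f \<in> l1A \<Longrightarrow> \<exists>c :: (cu2 \<Rightarrow> complex) \<Rightarrow> complex. (\<lambda>s. f s - (\<Sum>g\<in>F. c g * g s)) \<in> J"
    unfolding quot_finite_dim_def by blast
  define V where "V g m = Phi (Some ([], replicate m False)) (Some cu_e) g" for g m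
  show False
  proof (rule fd_contra[OF F(1), of V])
    fix n
    obtain c where c: "(\<lambda>s. l1delta (replicate n False, []) s - (\<Sum>g\<in>F. c g * g s)) \<in> J"
      using H[OF delta_l1A] by blast
    then have cI: "(\<lambda>s. l1delta (replicate n False, []) s - (\<Sum>g\<in>F. c g * g s)) \<in> Iset" using J_sub_I by blast
    have sl: "(\<lambda>s. \<Sum>g\<in>F. c g * g s) \<in> l1A" by (rule l1A_sum[OF F(1)]) (use F(2) in \<open>auto intro: l1A_scal\<close>)
    have "(if m = n then 1 else 0) = (\<Sum>g\<in>F. c g * V g m)" for m
    proof -
      have "0 = Phi (Some ([], replicate m False)) (Some cu_e) (\<lambda>s. l1delta (replicate n False, []) s - (\<Sum>g\<in>F. c g * g s))"
        using cI by (simp add: Iset_def)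
      also have "\<dots> = (if m = n then 1 else 0) - (\<Sum>g\<in>F. c g * V g m)"
        by (simp add: Phi_diff[OF delta_l1A sl] L_en Phi_sum[OF F(1)] l1A_scal F(2)[THEN subsetD] Phi_scal V_def)
      finally show ?thesis by simp
    qed
    then show "\<exists>c. \<forall>m. (if m = n then 1 else 0) = (\<Sum>g\<in>F. c g * V g m)" by blast
  qed
qed

lemma conv_s1_support: "(l1delta ([False],[]) #\<^sub>\<ell> b) u \<noteq> 0 \<Longrightarrow> \<exists>q. u = (False # fst q, snd q)"
proof -
  assume nz: "(l1delta ([False],[]) #\<^sub>\<ell> b) u \<noteq> 0"
  have "{q. cu_mult ([False],[]) q = Some u} \<noteq> {}"
  proof
    assume E: "{q. cu_mult ([False],[]) q = Some u} = {}"
    have "(l1delta ([False],[]) #\<^sub>\<ell> b) u = 0" by (simp only: conv_delta_left E infsum_empty)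
    with nz show False by simp
  qed
  then obtain q where "cu_mult ([False],[]) q = Some u" by blast
  then show ?thesis by (cases q) (auto simp: cu_mult_def)
qed

lemma not_div: "\<not> quot_division_algebra"
proof
  assume D: quot_division_algebra
  define a where "a = l1delta ([False],[])"
  have al: "a \<in> l1A" by (simp add: a_def delta_l1A)
  have P1: "Phi (Some ([],[False])) (Some cu_e) a = 1"
    by (simp add: a_def Phi_delta cu_mult_def cu_e_def tau_def)
  have "a \<notin> Iset"
  proof
    assume "a \<in> Iset"
    then have "Phi (Some ([],[False])) (Some cu_e) a = 0" by (simp add: Iset_def)
    with P1 show False by simp
  qed
  then have aJ: "a \<notin> J" using J_sub_I by blast
  obtain b where bl: "b \<in> l1A" and bJ: "qdiff (a #\<^sub>\<ell> b) l1unit \<in> J"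
    using D al aJ unfolding quot_division_algebra_def by blast
  have abl: "a #\<^sub>\<ell> b \<in> l1A" by (rule conv_l1A(1)[OF al bl])
  have ul: "l1unit \<in> l1A" by (simp add: l1unit_def delta_l1A)
  have z: "Phi (Some ([],[True])) (Some ([True],[])) (a #\<^sub>\<ell> b) = 0"
    unfolding Phi_def
  proof (rule infsum_0)
    fix u
    show "(a #\<^sub>\<ell> b) u * tau (mo (mo (Some ([], [True])) (Some u)) (Some ([True], []))) = 0"
    proof (cases "(a #\<^sub>\<ell> b) u = 0")
      case False
      then obtain q where "u = (False # fst q, snd q)" using conv_s1_support a_def by blast
      then show ?thesis by (simp add: cu_mult_def tau_def)
    qed simp
  qed
  have o: "Phi (Some ([],[True])) (Some ([True],[])) l1unit = 1"
    by (simp add: l1unit_def Phi_delta cu_mult_def cu_e_def tau_def)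
  have "Phi (Some ([],[True])) (Some ([True],[])) (qdiff (a #\<^sub>\<ell> b) l1unit) = -1"
    unfolding qdiff_def by (simp add: Phi_diff[OF abl ul] z o)
  moreover have "qdiff (a #\<^sub>\<ell> b) l1unit \<in> Iset" using bJ J_sub_I by blast
  ultimately show False by (simp add: Iset_def)
qed

lemma pure_inf: "quot_purely_infinite"
  unfolding quot_purely_infinite_def
proof (intro ballI impI)
  fix a assume a: "a \<in> l1A" and aJ: "a \<notin> J"
  then have "\<not> failing a" using failure by blast
  then obtain B C where BC: "\<not> norm (\<Sum>\<^sub>\<infinity>s\<in>{s. m3 B s C = Some cu_e}. a s)
                   \<le> (\<Sum>\<^sub>\<infinity>s\<in>{s. \<exists>u\<in>-{cu_e}. m3 B s C = Some u}. norm (a s))" by blast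
  obtain b c where b: "b \<in> l1A" and c: "c \<in> l1A" and e: "(b #\<^sub>\<ell> a) #\<^sub>\<ell> c = l1unit"
    using success[OF a, of B C] BC by force
  have "qdiff ((b #\<^sub>\<ell> a) #\<^sub>\<ell> c) l1unit = (\<lambda>s. 0)" by (simp add: e qdiff_def)
  then show "\<exists>b\<in>l1A. \<exists>c\<in>l1A. qdiff ((b #\<^sub>\<ell> a) #\<^sub>\<ell> c) l1unit \<in> J"
    using b c J_zero by metis
qed

theorem theorem3p17:
  shows "\<not> quot_finite_dim \<and> \<not> quot_division_algebra \<and> quot_purely_infinite"
  using not_fd not_div pure_inf by blast

end
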